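(* Let $2\le q<p<\infty$ and let $\mathcal{M}\subset\ell_p$ be an $n$-point metric space (with the $\ell_p$ metric). Suppose that for every $\Delta'>0$ there exists a $(\beta,\Delta')$-Lipschitz decomposition of $\mathcal{M}$. Then for every $\Delta>0$ there exists a $(\beta_{new},\Delta)$-Lipschitz decomposition of $\mathcal{M}$, where \[ \beta_{new} = 4\Big(\frac{p}{2q}\Big)^{q/p}\,[\beta^*_n(\ell_q)]^{q/p}\,\beta^{1-q/p}. \]
   Context: Let $(\mathcal{M},d_\mathcal{M})$ be a metric space. A distribution $\mathcal{D}$ over partitions of $\mathcal{M}$ is a $(\beta,\Delta)$-Lipschitz decomposition if (i) every cluster $C$ of every partition in the support of $\mathcal{D}$ has diameter at most $\Delta$; and (ii) for every $x,y\in\mathcal{M}$, $\Pr_{P\sim\mathcal{D}}[P(x)\ne P(y)]\le \beta\, d_\mathcal{M}(x,y)/\Delta$, where $P(z)$ is the cluster containing $z$. The decomposition parameter of $\mathcal{M}$ is $\beta^*(\mathcal{M}) = \inf\{\beta\ge 1 : \text{for all } \Delta>0, \text{every finite } \mathcal{M}'\subseteq\mathcal{M} \text{ admits a } (\beta,\Delta)\text{-Lipschitz decomposition}\}$, and $\beta^*_n(\mathcal{M}) = \sup\{\beta^*(\mathcal{M}') : \mathcal{M}'\subseteq\mathcal{M}, |\mathcal{M}'|\le n\}$. *)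

theory Defs
  imports "HOL-Probability.Probability" "HOL-Library.Disjoint_Sets"
begin

definition lp_space :: "real \<Rightarrow> (nat \<Rightarrow> real) set" where
  "lp_space p = {x. summable (\<lambda>i. \<bar>x i\<bar> powr p)}"

definition lp_dist :: "real \<Rightarrow> (nat \<Rightarrow> real) \<Rightarrow> (nat \<Rightarrow> real) \<Rightarrow> real" where
  "lp_dist p x y = (\<Sum>i. \<bar>x i - y i\<bar> powr p) powr (1 / p)"

text \<open>A (beta, Delta)-Lipschitz decomposition of the finite metric space (M, d):
  a probability distribution over partitions of M (since M is finite there are only
  finitely many partitions, so a pmf is fully general).\<close>

definition lipschitz_decomp ::
  "('a \<Rightarrow> 'a \<Rightarrow> real) \<Rightarrow> 'a set \<Rightarrow> real \<Rightarrow> real \<Rightarrow> 'a set set pmf \<Rightarrow> bool" where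
  "lipschitz_decomp d M \<beta> \<Delta> D \<longleftrightarrow>
     (\<forall>P\<in>set_pmf D. partition_on M P \<and> (\<forall>C\<in>P. \<forall>x\<in>C. \<forall>y\<in>C. d x y \<le> \<Delta>)) \<and>
     (\<forall>x\<in>M. \<forall>y\<in>M. measure_pmf.prob D {P. \<not> (\<exists>C\<in>P. x \<in> C \<and> y \<in> C)} \<le> \<beta> * d x y / \<Delta>)"

definition beta_star :: "('a \<Rightarrow> 'a \<Rightarrow> real) \<Rightarrow> 'a set \<Rightarrow> real" where
  "beta_star d M = Inf {\<beta>. \<beta> \<ge> 1 \<and> (\<forall>\<Delta>>0. \<forall>M'. M' \<subseteq> M \<and> finite M' \<longrightarrow>
        (\<exists>D. lipschitz_decomp d M' \<beta> \<Delta> D))}"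

definition beta_star_n :: "nat \<Rightarrow> ('a \<Rightarrow> 'a \<Rightarrow> real) \<Rightarrow> 'a set \<Rightarrow> real" where
  "beta_star_n n d M = Sup {beta_star d M' | M'. M' \<subseteq> M \<and> finite M' \<and> card M' \<le> n}"

end

theory Submission
  imports Defs
begin

lemma young_scaled:
  fixes u v A B SU SV s t :: real
  assumes st: "s>1" "t>1" "1/s+1/t=1" and uv: "u \<ge> 0" "v \<ge> 0"
  and A: "A > 0" "A powr s = SU" and B: "B > 0" "B powr t = SV"
  shows "u * v \<le> A * B * ((u powr s / SU) / s + (v powr t / SV) / t)"
proof -
  have "(u / A) * (v / B) \<le> (u / A) powr s / s + (v / B) powr t / t"
    using Youngs_inequality[OF st, of "u/A" "v/B"] uv A B by simp
  also have "(u / A) powr s = u powr s / SU" using A uv by (simp add: powr_divide)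
  also have "(v / B) powr t = v powr t / SV" using B uv by (simp add: powr_divide)
  finally have "(u / A) * (v / B) \<le> (u powr s / SU) / s + (v powr t / SV) / t" .
  then have "A * B * ((u / A) * (v / B)) \<le> A * B * ((u powr s / SU) / s + (v powr t / SV) / t)"
    using A B by (intro mult_left_mono) auto
  then show ?thesis using A B by simp
qed

lemma suminf_zero_terms:
  fixes f :: "nat \<Rightarrow> real"
  assumes "summable f" "\<And>i. f i \<ge> 0" "suminf f = 0"
  shows "f i = 0"
  using assms suminf_eq_zero_iff by blast

lemma holder_series:
  fixes u v :: "nat \<Rightarrow> real" and s t :: real
  assumes st: "s>1" "t>1" "1/s+1/t=1" and uv: "\<And>i. u i \<ge> 0" "\<And>i. v i \<ge> 0"
    and su: "summable (\<lambda>i. u i powr s)" and sv: "summable (\<lambda>i. v i powr t)"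
  shows "summable (\<lambda>i. u i * v i) \<and> (\<Sum>i. u i * v i) \<le> (\<Sum>i. u i powr s) powr (1/s) * (\<Sum>i. v i powr t) powr (1/t)"
proof -
  have young: "\<And>i. u i * v i \<le> u i powr s / s + v i powr t / t"
    using Youngs_inequality[OF st] uv by blast
  have sm: "summable (\<lambda>i. u i * v i)"
  proof (rule summable_comparison_test[where g="\<lambda>i. u i powr s / s + v i powr t / t"])
    show "\<exists>N. \<forall>n\<ge>N. norm (u n * v n) \<le> u n powr s / s + v n powr t / t"
      using young uv by auto
    show "summable (\<lambda>i. u i powr s / s + v i powr t / t)"
      using su sv by (intro summable_add summable_divide) auto
  qed
  define SU where "SU = (\<Sum>i. u i powr s)"
  define SV where "SV = (\<Sum>i. v i powr t)"
  have SU0: "SU \<ge> 0" unfolding SU_def by (intro suminf_nonneg su) simp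
  have SV0: "SV \<ge> 0" unfolding SV_def by (intro suminf_nonneg sv) simp
  have main: "(\<Sum>i. u i * v i) \<le> SU powr (1/s) * SV powr (1/t)"
  proof (cases "SU = 0 \<or> SV = 0")
    case True
    have z: "u i * v i = 0" for i
    proof (cases "SU = 0")
      case True
      have "u i powr s = 0"
        by (rule suminf_zero_terms[OF su]) (use True in \<open>auto simp: SU_def\<close>)
      then have "u i = 0" by simp
      then show ?thesis by simp
    next
      case False
      then have "SV = 0" using \<open>SU = 0 \<or> SV = 0\<close> by blast
      have "v i powr t = 0"
        by (rule suminf_zero_terms[OF sv]) (use \<open>SV = 0\<close> in \<open>auto simp: SV_def\<close>)
      then have "v i = 0" by simp
      then show ?thesis by simp
    qed
    have "(\<lambda>i. u i * v i) = (\<lambda>i. 0)" using z by (intro ext) simp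
    then have "(\<Sum>i. u i * v i) = 0" by simp
    also have "0 \<le> SU powr (1/s) * SV powr (1/t)" by simp
    finally show ?thesis .
  next
    case False
    then have pos: "SU > 0" "SV > 0" using SU0 SV0 by auto
    define A where "A = SU powr (1/s)"
    define B where "B = SV powr (1/t)"
    have A: "A > 0" "A powr s = SU" unfolding A_def using pos st by (auto simp: powr_powr)
    have B: "B > 0" "B powr t = SV" unfolding B_def using pos st by (auto simp: powr_powr)
    have pt: "u i * v i \<le> A * B * ((u i powr s / SU) / s + (v i powr t / SV) / t)" for i
      by (rule young_scaled[OF st uv(1) uv(2) A B])
    have s1: "summable (\<lambda>i. (u i powr s / SU) / s)" using su by (intro summable_divide)
    have s2: "summable (\<lambda>i. (v i powr t / SV) / t)" using sv by (intro summable_divide)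
    have s12: "summable (\<lambda>i. A * B * ((u i powr s / SU) / s + (v i powr t / SV) / t))"
      by (intro summable_mult summable_add s1 s2)
    have "(\<Sum>i. u i * v i) \<le> (\<Sum>i. A * B * ((u i powr s / SU) / s + (v i powr t / SV) / t))"
      by (rule suminf_le[OF pt sm s12])
    also have "(\<Sum>i. A * B * ((u i powr s / SU) / s + (v i powr t / SV) / t))
          = A * B * (\<Sum>i. ((u i powr s / SU) / s + (v i powr t / SV) / t))"
      using summable_add[OF s1 s2] by (rule suminf_mult)
    also have "(\<Sum>i. ((u i powr s / SU) / s + (v i powr t / SV) / t)) = (\<Sum>i. (u i powr s / SU) / s) + (\<Sum>i. (v i powr t / SV) / t)"
      using s1 s2 by (rule suminf_add[symmetric])
    also have "(\<Sum>i. (u i powr s / SU) / s) = SU / SU / s"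
      using su unfolding SU_def by (simp add: suminf_divide)
    also have "(\<Sum>i. (v i powr t / SV) / t) = SV / SV / t"
      using sv unfolding SV_def by (simp add: suminf_divide)
    also have "A * B * (SU / SU / s + SV / SV / t) = A * B" using pos st by simp
    finally show ?thesis unfolding A_def B_def .
  qed
  show ?thesis using sm main unfolding SU_def SV_def by simp
qed

definition lpn :: "real \<Rightarrow> (nat \<Rightarrow> real) \<Rightarrow> real" where
  "lpn p x = (\<Sum>i. \<bar>x i\<bar> powr p) powr (1/p)"

lemma lp_dist_lpn: "lp_dist p x y = lpn p (\<lambda>i. x i - y i)"
  unfolding lp_dist_def lpn_def ..

lemma lpn_nonneg: "lpn p x \<ge> 0" unfolding lpn_def by simp

lemma lp_space_iff: "x \<in> lp_space p \<longleftrightarrow> summable (\<lambda>i. \<bar>x i\<bar> powr p)"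
  unfolding lp_space_def by simp

lemma abs_add_powr_le:
  fixes a b p :: real assumes "p > 0"
  shows "\<bar>a + b\<bar> powr p \<le> 2 powr p * (\<bar>a\<bar> powr p + \<bar>b\<bar> powr p)"
proof -
  have "\<bar>a + b\<bar> \<le> 2 * max \<bar>a\<bar> \<bar>b\<bar>" by linarith
  then have "\<bar>a + b\<bar> powr p \<le> (2 * max \<bar>a\<bar> \<bar>b\<bar>) powr p"
    using assms by (intro powr_mono2) auto
  also have "\<dots> = 2 powr p * (max \<bar>a\<bar> \<bar>b\<bar>) powr p" by (simp add: powr_mult)
  also have "(max \<bar>a\<bar> \<bar>b\<bar>) powr p \<le> \<bar>a\<bar> powr p + \<bar>b\<bar> powr p"
    by (cases "\<bar>a\<bar> \<le> \<bar>b\<bar>") (auto simp: max_def)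
  finally show ?thesis by simp
qed

lemma lp_add:
  assumes "p > 0" "x \<in> lp_space p" "y \<in> lp_space p"
  shows "(\<lambda>i. x i + y i) \<in> lp_space p"
proof -
  have "summable (\<lambda>i. 2 powr p * (\<bar>x i\<bar> powr p + \<bar>y i\<bar> powr p))"
    using assms by (intro summable_mult summable_add) (auto simp: lp_space_iff)
  then show ?thesis unfolding lp_space_iff
    by (rule summable_comparison_test[rotated]) (use abs_add_powr_le[OF assms(1)] in auto)
qed

lemma lp_scale:
  assumes "x \<in> lp_space p"
  shows "(\<lambda>i. c * x i) \<in> lp_space p"
proof -
  have "summable (\<lambda>i. \<bar>c\<bar> powr p * \<bar>x i\<bar> powr p)"
    using assms by (intro summable_mult) (auto simp: lp_space_iff)
  then show ?thesis unfolding lp_space_iff by (simp add: abs_mult powr_mult)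
qed

lemma lp_minus:
  assumes "p > 0" "x \<in> lp_space p" "y \<in> lp_space p"
  shows "(\<lambda>i. x i - y i) \<in> lp_space p"
proof -
  have "(\<lambda>i. (-1) * y i) \<in> lp_space p" by (rule lp_scale[OF assms(3)])
  from lp_add[OF assms(1,2) this] show ?thesis by simp
qed

lemma lp_zero: "(\<lambda>i. 0) \<in> lp_space p"
  unfolding lp_space_iff by simp

lemma lpn_scale:
  assumes "p > 0" "x \<in> lp_space p"
  shows "lpn p (\<lambda>i. c * x i) = \<bar>c\<bar> * lpn p x"
proof -
  have "(\<Sum>i. \<bar>c * x i\<bar> powr p) = \<bar>c\<bar> powr p * (\<Sum>i. \<bar>x i\<bar> powr p)"
    using assms by (simp add: abs_mult powr_mult suminf_mult lp_space_iff)
  then have "lpn p (\<lambda>i. c * x i) = (\<bar>c\<bar> powr p * (\<Sum>i. \<bar>x i\<bar> powr p)) powr (1/p)"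
    unfolding lpn_def by simp
  also have "\<dots> = (\<bar>c\<bar> powr p) powr (1/p) * lpn p x"
    unfolding lpn_def by (subst powr_mult) (auto intro: suminf_nonneg simp: assms[unfolded lp_space_iff])
  also have "(\<bar>c\<bar> powr p) powr (1/p) = \<bar>c\<bar>" using assms by (simp add: powr_powr)
  finally show ?thesis .
qed

lemma lpn_powr:
  assumes "p > 0" "x \<in> lp_space p"
  shows "lpn p x powr p = (\<Sum>i. \<bar>x i\<bar> powr p)"
  unfolding lpn_def using assms by (simp add: powr_powr suminf_nonneg lp_space_iff)

lemma minkowski:
  assumes p: "p > 1" and x: "x \<in> lp_space p" and y: "y \<in> lp_space p"
  shows "lpn p (\<lambda>i. x i + y i) \<le> lpn p x + lpn p y"
proof -
  define z where "z = (\<lambda>i. x i + y i)"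
  have zl: "z \<in> lp_space p" unfolding z_def using lp_add p x y by simp
  define S where "S = (\<Sum>i. \<bar>z i\<bar> powr p)"
  have sz: "summable (\<lambda>i. \<bar>z i\<bar> powr p)" using zl by (simp add: lp_space_iff)
  have S0: "S \<ge> 0" unfolding S_def by (intro suminf_nonneg sz) simp
  show ?thesis
  proof (cases "S = 0")
    case True
    then have "lpn p z = 0" unfolding lpn_def S_def[symmetric] by simp
    then show ?thesis using lpn_nonneg[of p x] lpn_nonneg[of p y] unfolding z_def by simp
  next
    case False
    then have Spos: "S > 0" using S0 by simp
    define t where "t = p / (p - 1)"
    have st: "p > 1" "t > 1" "1/p + 1/t = 1" using p unfolding t_def by (auto simp: field_simps)
    have vt: "(\<bar>z i\<bar> powr (p - 1)) powr t = \<bar>z i\<bar> powr p" for i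
      using p unfolding t_def by (simp add: powr_powr)
    have svt: "summable (\<lambda>i. (\<bar>z i\<bar> powr (p - 1)) powr t)" unfolding vt by (rule sz)
    have Sp: "(\<Sum>i. (\<bar>z i\<bar> powr (p - 1)) powr t) powr (1/t) = S powr ((p-1)/p)"
    proof -
      have "(\<Sum>i. (\<bar>z i\<bar> powr (p - 1)) powr t) = S" unfolding S_def vt ..
      moreover have "1/t = (p-1)/p" unfolding t_def using p by simp
      ultimately show ?thesis by simp
    qed
    have hx: "summable (\<lambda>i. \<bar>x i\<bar> * \<bar>z i\<bar> powr (p - 1)) \<and>
       (\<Sum>i. \<bar>x i\<bar> * \<bar>z i\<bar> powr (p - 1)) \<le> lpn p x * S powr ((p-1)/p)"
      using holder_series[OF st, of "\<lambda>i. \<bar>x i\<bar>" "\<lambda>i. \<bar>z i\<bar> powr (p - 1)"] x svt Sp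
      by (simp add: lp_space_iff lpn_def)
    have hy: "summable (\<lambda>i. \<bar>y i\<bar> * \<bar>z i\<bar> powr (p - 1)) \<and>
       (\<Sum>i. \<bar>y i\<bar> * \<bar>z i\<bar> powr (p - 1)) \<le> lpn p y * S powr ((p-1)/p)"
      using holder_series[OF st, of "\<lambda>i. \<bar>y i\<bar>" "\<lambda>i. \<bar>z i\<bar> powr (p - 1)"] y svt Sp
      by (simp add: lp_space_iff lpn_def)
    have pt: "\<bar>z i\<bar> powr p \<le> \<bar>x i\<bar> * \<bar>z i\<bar> powr (p - 1) + \<bar>y i\<bar> * \<bar>z i\<bar> powr (p - 1)" for i
    proof -
      have "\<bar>z i\<bar> powr p = \<bar>z i\<bar> * \<bar>z i\<bar> powr (p - 1)"
        using powr_add[of "\<bar>z i\<bar>" 1 "p - 1"] by simp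
      also have "\<dots> \<le> (\<bar>x i\<bar> + \<bar>y i\<bar>) * \<bar>z i\<bar> powr (p - 1)"
        unfolding z_def by (intro mult_right_mono) auto
      finally show ?thesis by (simp add: algebra_simps)
    qed
    have "S \<le> (\<Sum>i. \<bar>x i\<bar> * \<bar>z i\<bar> powr (p - 1) + \<bar>y i\<bar> * \<bar>z i\<bar> powr (p - 1))"
      unfolding S_def using pt sz hx hy by (intro suminf_le summable_add) auto
    also have "\<dots> = (\<Sum>i. \<bar>x i\<bar> * \<bar>z i\<bar> powr (p - 1)) + (\<Sum>i. \<bar>y i\<bar> * \<bar>z i\<bar> powr (p - 1))"
      using hx hy by (intro suminf_add[symmetric]) auto
    also have "\<dots> \<le> (lpn p x + lpn p y) * S powr ((p-1)/p)"
      using hx hy by (simp add: algebra_simps)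
    finally have le: "S \<le> (lpn p x + lpn p y) * S powr ((p-1)/p)" .
    have "S = S powr (1/p) * S powr ((p-1)/p)"
      using Spos p by (simp add: powr_add[symmetric] field_simps)
    with le have "S powr (1/p) * S powr ((p-1)/p) \<le> (lpn p x + lpn p y) * S powr ((p-1)/p)" by simp
    then have "S powr (1/p) \<le> lpn p x + lpn p y"
      using Spos by (simp add: mult_le_cancel_right)
    then show ?thesis unfolding lpn_def S_def z_def .
  qed
qed

lemma lp_dist_triangle:
  assumes "p > 1" "x \<in> lp_space p" "y \<in> lp_space p" "z \<in> lp_space p"
  shows "lp_dist p x z \<le> lp_dist p x y + lp_dist p y z"
proof -
  have "(\<lambda>i. x i - y i) \<in> lp_space p" "(\<lambda>i. y i - z i) \<in> lp_space p"
    using assms lp_minus by auto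
  from minkowski[OF assms(1) this] show ?thesis unfolding lp_dist_lpn by simp
qed

lemma lp_dist_sym: "lp_dist p x y = lp_dist p y x"
  unfolding lp_dist_def by (simp add: abs_minus_commute)

lemma lp_dist_self: "lp_dist p x x = 0"
  unfolding lp_dist_def by simp

lemma lp_dist_nonneg: "lp_dist p x y \<ge> 0"
  unfolding lp_dist_def by simp

lemma lpn_pos:
  assumes "p > 0" "x \<in> lp_space p" "x i \<noteq> 0"
  shows "lpn p x > 0"
proof -
  have s: "summable (\<lambda>i. \<bar>x i\<bar> powr p)" using assms(2) unfolding lp_space_iff .
  have "(\<Sum>i. \<bar>x i\<bar> powr p) \<noteq> 0"
  proof
    assume "(\<Sum>i. \<bar>x i\<bar> powr p) = 0"
    then have "\<bar>x i\<bar> powr p = 0" by (intro suminf_zero_terms[OF s]) auto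
    then show False using assms(1,3) by simp
  qed
  moreover have "(\<Sum>i. \<bar>x i\<bar> powr p) \<ge> 0" by (intro suminf_nonneg s) simp
  ultimately show ?thesis unfolding lpn_def by simp
qed

lemma lp_dist_pos:
  assumes "p > 0" "x \<in> lp_space p" "y \<in> lp_space p" "x \<noteq> y"
  shows "lp_dist p x y > 0"
proof -
  obtain i where "x i \<noteq> y i" using assms(4) by auto
  then show ?thesis unfolding lp_dist_lpn
    by (intro lpn_pos[of p _ i] lp_minus assms) auto
qed

lemma lpn_sum:
  assumes p: "p > 1" and A: "finite A" and f: "\<And>a. a \<in> A \<Longrightarrow> f a \<in> lp_space p"
  shows "(\<lambda>i. \<Sum>a\<in>A. f a i) \<in> lp_space p \<and> lpn p (\<lambda>i. \<Sum>a\<in>A. f a i) \<le> (\<Sum>a\<in>A. lpn p (f a))"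
  using A f
proof (induction A rule: finite_induct)
  case empty
  then show ?case using lp_zero[of p] by (simp add: lpn_def)
next
  case (insert a F)
  then have IH: "(\<lambda>i. \<Sum>a\<in>F. f a i) \<in> lp_space p" "lpn p (\<lambda>i. \<Sum>a\<in>F. f a i) \<le> (\<Sum>a\<in>F. lpn p (f a))"
    by auto
  have fa: "f a \<in> lp_space p" using insert by auto
  have eq: "(\<lambda>i. \<Sum>a\<in>insert a F. f a i) = (\<lambda>i. f a i + (\<Sum>a\<in>F. f a i))"
    using insert by simp
  have "lpn p (\<lambda>i. f a i + (\<Sum>a\<in>F. f a i)) \<le> lpn p (f a) + lpn p (\<lambda>i. \<Sum>a\<in>F. f a i)"
    using minkowski[OF p fa IH(1)] by simp
  also have "\<dots> \<le> lpn p (f a) + (\<Sum>a\<in>F. lpn p (f a))" using IH(2) by simp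
  finally show ?case unfolding eq using insert lp_add[OF _ fa IH(1)] p by simp
qed

definition centroid :: "(nat \<Rightarrow> real) set \<Rightarrow> nat \<Rightarrow> real" where
  "centroid C = (\<lambda>i. (\<Sum>y\<in>C. y i) / real (card C))"

lemma centroid_lp:
  assumes "p > 1" "finite C" "C \<subseteq> lp_space p"
  shows "centroid C \<in> lp_space p"
proof -
  have "(\<lambda>i. \<Sum>y\<in>C. y i) \<in> lp_space p" using lpn_sum[OF assms(1,2), of "\<lambda>y. y"] assms by auto
  from lp_scale[OF this, of "1 / real (card C)"] show ?thesis
    unfolding centroid_def by simp
qed

lemma centroid_bound:
  assumes p: "p > 1" and C: "finite C" "C \<subseteq> lp_space p" and x: "x \<in> C"
    and diam: "\<And>y. y \<in> C \<Longrightarrow> lp_dist p x y \<le> D"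
  shows "lp_dist p x (centroid C) \<le> (real (card C) - 1) / real (card C) * D"
proof -
  define m where "m = real (card C)"
  have "card C > 0" using C x by (auto simp: card_gt_0_iff)
  then have m: "m \<ge> 1" unfolding m_def by simp
  have eq: "(\<lambda>i. x i - centroid C i) = (\<lambda>i. (1/m) * (\<Sum>y\<in>C. x i - y i))"
    unfolding centroid_def m_def[symmetric] using m
    by (intro ext) (simp add: sum_subtractf field_simps m_def)
  have xl: "x \<in> lp_space p" using C x by auto
  have fl: "\<And>y. y \<in> C \<Longrightarrow> (\<lambda>i. x i - y i) \<in> lp_space p" using lp_minus p xl C by auto
  from lpn_sum[OF p C(1), of "\<lambda>y i. x i - y i"] fl
  have S: "(\<lambda>i. \<Sum>y\<in>C. x i - y i) \<in> lp_space p" "lpn p (\<lambda>i. \<Sum>y\<in>C. x i - y i) \<le> (\<Sum>y\<in>C. lp_dist p x y)"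
    by (auto simp: lp_dist_lpn)
  have "(\<Sum>y\<in>C. lp_dist p x y) = (\<Sum>y\<in>C - {x}. lp_dist p x y)"
    using C x by (simp add: sum.remove lp_dist_self)
  also have "\<dots> \<le> (\<Sum>y\<in>C - {x}. D)" using diam by (intro sum_mono) auto
  also have "\<dots> = (m - 1) * D"
  proof -
    have "card (C - {x}) = card C - 1" using C x by simp
    then have "real (card (C - {x})) = m - 1" using \<open>card C > 0\<close> unfolding m_def by linarith
    then show ?thesis by simp
  qed
  finally have le: "(\<Sum>y\<in>C. lp_dist p x y) \<le> (m - 1) * D" .
  have "lp_dist p x (centroid C) = (1/m) * lpn p (\<lambda>i. \<Sum>y\<in>C. x i - y i)"
    unfolding lp_dist_lpn eq using lpn_scale[OF _ S(1), of "1/m"] p m by simp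
  also have "\<dots> \<le> (1/m) * ((m - 1) * D)" using S(2) le m by (intro mult_left_mono) auto
  finally show ?thesis unfolding m_def by simp
qed

lemma two_powr_ge: fixes s :: real assumes "0 \<le> s" "s \<le> 1" shows "s \<le> 2 powr (s - 1)"
proof -
  have "2 powr (s - 1) = exp ((s - 1) * ln 2)" by (simp add: powr_def)
  also have "\<dots> \<ge> 1 + (s - 1) * ln 2" by (rule exp_ge_add_one_self)
  finally have a: "1 + (s - 1) * ln 2 \<le> 2 powr (s - 1)" .
  have "0 \<le> (1 - s) * (1 - ln 2)" using assms ln_2_less_1 by (intro mult_nonneg_nonneg) auto
  then have "s \<le> 1 + (s - 1) * ln 2" by (simp add: algebra_simps)
  with a show ?thesis by linarith
qed

lemma powr_split1: fixes a r :: real assumes "0 \<le> a" shows "a powr r = a * a powr (r - 1)"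
proof (cases "a = 0")
  case False
  have "a powr (1 + (r - 1)) = a powr 1 * a powr (r - 1)" by (rule powr_add)
  then show ?thesis using assms by simp
qed simp

lemma superadd_powr:
  fixes a b r :: real assumes "1 \<le> r" "0 \<le> a" "0 \<le> b"
  shows "a powr r + b powr r \<le> (a + b) powr r"
proof -
  have "a powr (r - 1) \<le> (a + b) powr (r - 1)" using assms by (intro powr_mono2) auto
  then have 1: "a * a powr (r - 1) \<le> a * (a + b) powr (r - 1)" using assms by (intro mult_left_mono) auto
  have "b powr (r - 1) \<le> (a + b) powr (r - 1)" using assms by (intro powr_mono2) auto
  then have 2: "b * b powr (r - 1) \<le> b * (a + b) powr (r - 1)" using assms by (intro mult_left_mono) auto
  have "a powr r + b powr r = a * a powr (r - 1) + b * b powr (r - 1)"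
    using assms powr_split1[of a r] powr_split1[of b r] by simp
  also have "\<dots> \<le> a * (a + b) powr (r - 1) + b * (a + b) powr (r - 1)" using 1 2 by simp
  also have "\<dots> = (a + b) * (a + b) powr (r - 1)" by (simp add: algebra_simps)
  also have "\<dots> = (a + b) powr r" using assms powr_split1[of "a+b" r] by simp
  finally show ?thesis .
qed

lemma midconv_ge1:
  fixes x y e :: real assumes e: "1 \<le> e" and xy: "0 \<le> x" "0 \<le> y"
  shows "((x + y) / 2) powr e \<le> (x powr e + y powr e) / 2"
proof (cases "x = 0 \<or> y = 0")
  case True
  have g: "(z / 2) powr e \<le> z powr e / 2" if "0 \<le> z" for z :: real
  proof -
    have "2 powr 1 \<le> 2 powr e" using e by (intro powr_mono) auto
    then have "2 \<le> 2 powr e" by simp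
    have "(z / 2) powr e = z powr e / 2 powr e" using that by (simp add: powr_divide)
    also have "\<dots> \<le> z powr e / 2" using \<open>2 \<le> 2 powr e\<close>
      by (intro divide_left_mono) auto
    finally show ?thesis .
  qed
  from True show ?thesis
  proof
    assume "x = 0" then show ?thesis using g[OF xy(2)] e by simp
  next
    assume "y = 0" then show ?thesis using g[OF xy(1)] e by simp
  qed
next
  case False
  then have pos: "x > 0" "y > 0" using xy by auto
  have c: "convex_on {0<..} (\<lambda>x::real. x powr e)" by (rule powr_convex[OF e])
  have "(\<lambda>x::real. x powr e) ((1 - 1/2) *\<^sub>R x + (1/2) *\<^sub>R y) \<le> (1 - 1/2) * x powr e + (1/2) * y powr e"
    by (rule convex_onD[OF c]) (use pos in auto)
  then show ?thesis by (simp add: field_simps)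
qed

lemma midconv_neg:
  fixes x y e :: real assumes e: "e \<le> 0" and xy: "0 < x" "0 < y"
  shows "((x + y) / 2) powr e \<le> (x powr e + y powr e) / 2"
proof -
  have g: "sqrt (x * y) \<le> (x + y) / 2" using xy by (intro arith_geo_mean_sqrt) auto
  have sp: "sqrt (x * y) > 0" using xy by simp
  have "((x + y) / 2) powr e \<le> sqrt (x * y) powr e" by (rule powr_mono2'[OF e sp g])
  also have "sqrt (x * y) powr e = sqrt (x powr e * y powr e)"
    using xy by (simp add: powr_half_sqrt[symmetric] powr_powr powr_mult mult.commute)
  also have "\<dots> \<le> (x powr e + y powr e) / 2" by (intro arith_geo_mean_sqrt) auto
  finally show ?thesis .
qed

lemma deriv_shift_powr:
  fixes m w s :: real assumes "m + w > 0"
  shows "((\<lambda>w. (m + w) powr s) has_real_derivative s * (m + w) powr (s - 1)) (at w)"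
proof -
  have d1: "((\<lambda>w. m + w) has_real_derivative 1) (at w)" by (auto intro!: derivative_eq_intros)
  have "((\<lambda>w. (m + w) powr s) has_real_derivative (s * (m + w) powr (s - 1)) * 1) (at w)"
    by (rule DERIV_chain2[OF has_real_derivative_powr[OF assms] d1])
  then show ?thesis by simp
qed

lemma deriv_shift_powr':
  fixes m w s :: real assumes "m - w > 0"
  shows "((\<lambda>w. (m - w) powr s) has_real_derivative - (s * (m - w) powr (s - 1))) (at w)"
proof -
  have d1: "((\<lambda>w. m - w) has_real_derivative -1) (at w)" by (auto intro!: derivative_eq_intros)
  have "((\<lambda>w. (m - w) powr s) has_real_derivative (s * (m - w) powr (s - 1)) * -1) (at w)"
    by (rule DERIV_chain2[OF has_real_derivative_powr[OF assms] d1])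
  then show ?thesis by simp
qed

lemma key_S1u:
  fixes s u v :: real assumes s: "0 < s" "s \<le> 1" and uv: "0 \<le> v" "v \<le> u"
  shows "s * (u - v) * ((u + v) / 2) powr (s - 1) \<le> u powr s - v powr s"
proof -
  consider "v = u" | "v = 0" "0 < u" | "0 < v" "v < u" using uv by linarith
  then show ?thesis
  proof cases
    case 1 then show ?thesis by simp
  next
    case 2
    have "(u / 2) powr (s - 1) = u powr (s - 1) / 2 powr (s - 1)" using 2 by (simp add: powr_divide)
    then have "s * (u - v) * ((u + v) / 2) powr (s - 1) = (s / 2 powr (s - 1)) * (u * u powr (s - 1))"
      using 2 by simp
    also have "u * u powr (s - 1) = u powr s" using powr_split1[of u s] 2 by simp
    also have "(s / 2 powr (s - 1)) * u powr s \<le> 1 * u powr s"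
    proof (intro mult_right_mono)
      show "s / 2 powr (s - 1) \<le> 1" using two_powr_ge[of s] s by simp
    qed simp
    finally show ?thesis using 2 by simp
  next
    case 3
    define m where "m = (u + v) / 2"
    define w0 where "w0 = (u - v) / 2"
    have mw: "0 < w0" "w0 < m" unfolding m_def w0_def using 3 by auto
    define k where "k = (\<lambda>w. (m + w) powr s - (m - w) powr s - 2 * w * s * m powr (s - 1))"
    define k' where "k' = (\<lambda>w. s * (m + w) powr (s - 1) + s * (m - w) powr (s - 1) - 2 * s * m powr (s - 1))"
    have kd: "(k has_real_derivative k' w) (at w)" if w: "w \<in> {0..w0}" for w
    proof -
      have p1: "m + w > 0" and p2: "m - w > 0" using mw w by auto
      have "((\<lambda>w. (m + w) powr s - (m - w) powr s - 2 * w * s * m powr (s - 1)) has_real_derivative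
          s * (m + w) powr (s - 1) - - (s * (m - w) powr (s - 1)) - 2 * 1 * s * m powr (s - 1)) (at w)"
        by (intro DERIV_diff deriv_shift_powr[OF p1] deriv_shift_powr'[OF p2] DERIV_cmult_right DERIV_cmult DERIV_ident)
      then show ?thesis unfolding k_def k'_def by (simp add: algebra_simps)
    qed
    have kn: "0 \<le> k' w" if w: "w \<in> {0..w0}" for w
    proof -
      have p1: "m + w > 0" and p2: "m - w > 0" using mw w by auto
      have "m powr (s - 1) \<le> ((m + w) powr (s - 1) + (m - w) powr (s - 1)) / 2"
        using midconv_neg[of "s - 1" "m + w" "m - w"] p1 p2 s by simp
      then have "s * m powr (s - 1) \<le> s * (((m + w) powr (s - 1) + (m - w) powr (s - 1)) / 2)"
        using s by (intro mult_left_mono) auto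
      then show ?thesis unfolding k'_def by (simp add: algebra_simps)
    qed
    have "k 0 \<le> k w0"
      by (rule deriv_nonneg_imp_mono[of 0 w0 k k', OF kd kn]) (use mw in auto)
    moreover have "k 0 = 0" unfolding k_def by simp
    moreover have e1: "m + w0 = u" "m - w0 = v" "2 * w0 = u - v" unfolding m_def w0_def by (auto simp: field_simps)
    moreover have e2: "2 * w0 * s * m powr (s - 1) = s * (u - v) * ((u + v) / 2) powr (s - 1)"
      using e1(3) unfolding m_def by simp
    moreover have "k w0 = u powr s - v powr s - s * (u - v) * ((u + v) / 2) powr (s - 1)"
      unfolding k_def by (simp only: e1(1) e1(2) e2)
    ultimately show ?thesis by linarith
  qed
qed

lemma S1:
  fixes a b r :: real assumes r: "1 \<le> r" and ab: "0 \<le> b" "b \<le> a"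
  shows "a powr r - b powr r \<le> r * (a - b) * ((a powr r + b powr r) / 2) powr ((r - 1) / r)"
proof -
  define u where "u = a powr r"
  define v where "v = b powr r"
  define s where "s = 1 / r"
  have s: "0 < s" "s \<le> 1" unfolding s_def using r by auto
  have uv: "0 \<le> v" "v \<le> u" unfolding u_def v_def using ab r by (auto intro: powr_mono2)
  have ua: "u powr s = a" unfolding u_def s_def using r ab by (simp add: powr_powr)
  have vb: "v powr s = b" unfolding v_def s_def using r ab by (simp add: powr_powr)
  define M where "M = (u + v) / 2"
  have key: "s * (u - v) * M powr (s - 1) \<le> a - b"
    using key_S1u[OF s uv] unfolding ua vb M_def .
  show ?thesis
  proof (cases "M = 0")
    case True
    then have "u = 0" "v = 0" using uv unfolding M_def by auto
    then have "a = 0" "b = 0" using ua vb by auto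
    then show ?thesis by simp
  next
    case False
    then have Mp: "M > 0" using uv unfolding M_def by auto
    have e: "M powr (s - 1) * M powr ((r - 1) / r) = 1"
    proof -
      have "M powr (s - 1) * M powr ((r - 1) / r) = M powr ((s - 1) + (r - 1) / r)"
        by (rule powr_add[symmetric])
      also have "(s - 1) + (r - 1) / r = 0" unfolding s_def using r by (simp add: field_simps)
      finally show ?thesis using Mp by simp
    qed
    have "r * M powr ((r - 1) / r) * (s * (u - v) * M powr (s - 1)) \<le> r * M powr ((r - 1) / r) * (a - b)"
      using key r by (intro mult_left_mono) auto
    moreover have "r * M powr ((r - 1) / r) * (s * (u - v) * M powr (s - 1)) = (r * s) * (u - v) * (M powr (s - 1) * M powr ((r - 1) / r))"
      by (simp add: algebra_simps)
    moreover have "r * s = 1" unfolding s_def using r by simp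
    ultimately have "u - v \<le> r * (a - b) * M powr ((r - 1) / r)" unfolding e by (simp add: algebra_simps)
    then show ?thesis unfolding u_def v_def M_def .
  qed
qed

lemma S2:
  fixes a c r :: real assumes r: "1 \<le> r" and ac: "0 \<le> a" "0 \<le> c"
  shows "a powr r + c powr r \<le> r * (a + c) * ((a powr r + c powr r) / 2) powr ((r - 1) / r)"
proof -
  define M where "M = (a powr r + c powr r) / 2"
  show ?thesis
  proof (cases "M = 0")
    case True
    then have "a powr r + c powr r = 0" unfolding M_def by simp
    then show ?thesis using ac r by simp
  next
    case False
    moreover have "M \<ge> 0" unfolding M_def by simp
    ultimately have Mp: "M > 0" by linarith
    have split: "M = M powr (1 / r) * M powr ((r - 1) / r)"
    proof -
      have "M powr (1 / r) * M powr ((r - 1) / r) = M powr (1 / r + (r - 1) / r)"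
        by (rule powr_add[symmetric])
      also have "1 / r + (r - 1) / r = 1" using r by (simp add: field_simps)
      finally show ?thesis using Mp by simp
    qed
    have "M \<le> (a + c) powr r / 2" unfolding M_def using superadd_powr[OF r ac] by simp
    then have "M powr (1 / r) \<le> ((a + c) powr r / 2) powr (1 / r)"
      using Mp r by (intro powr_mono2) auto
    also have "\<dots> = (a + c) / 2 powr (1 / r)"
      using ac r by (simp add: powr_divide powr_powr)
    finally have m1: "M powr (1 / r) \<le> (a + c) / 2 powr (1 / r)" .
    have t: "2 / 2 powr (1 / r) \<le> r"
    proof -
      have h: "1 / r \<le> 2 powr (1 / r - 1)" using two_powr_ge[of "1/r"] r by simp
      have "2 powr (1 / r - 1) = 2 powr (1 / r) / 2" by (simp add: powr_diff)
      with h have "1 / r \<le> 2 powr (1 / r) / 2" by simp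
      then show ?thesis using r by (simp add: field_simps)
    qed
    have "a powr r + c powr r = 2 * M" unfolding M_def by simp
    also have "\<dots> = 2 * M powr (1 / r) * M powr ((r - 1) / r)" using split by simp
    also have "\<dots> \<le> 2 * ((a + c) / 2 powr (1 / r)) * M powr ((r - 1) / r)"
      using m1 by (intro mult_right_mono mult_left_mono) auto
    also have "\<dots> = (2 / 2 powr (1 / r)) * (a + c) * M powr ((r - 1) / r)" by simp
    also have "\<dots> \<le> r * (a + c) * M powr ((r - 1) / r)"
      using t ac by (intro mult_right_mono) auto
    finally show ?thesis unfolding M_def .
  qed
qed

definition mz :: "real \<Rightarrow> real \<Rightarrow> real" where
  "mz r t = sgn t * \<bar>t\<bar> powr r"

lemma mz_nonneg: "0 \<le> t \<Longrightarrow> mz r t = t powr r"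
  unfolding mz_def by (cases "t = 0") auto

lemma mz_nonpos: "t \<le> 0 \<Longrightarrow> mz r t = - ((- t) powr r)"
  unfolding mz_def by (cases "t = 0") auto

lemma mz_abs: "\<bar>mz r t\<bar> = \<bar>t\<bar> powr r"
  unfolding mz_def by (cases "t = 0") (auto simp: abs_mult)

abbreviation GG :: "real \<Rightarrow> real \<Rightarrow> real \<Rightarrow> real" where
  "GG r a b \<equiv> ((\<bar>a\<bar> powr r + \<bar>b\<bar> powr r) / 2) powr ((r - 1) / r)"

lemma mz_upper_pos:
  fixes a b r :: real assumes r: "1 \<le> r" and ab: "0 \<le> a" "0 \<le> b"
  shows "\<bar>mz r a - mz r b\<bar> \<le> r * \<bar>a - b\<bar> * GG r a b"
proof (cases "b \<le> a")
  case True
  have "a powr r - b powr r \<ge> 0" using True ab r by (simp add: powr_mono2)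
  then show ?thesis using S1[OF r ab(2) True] ab True by (simp add: mz_nonneg)
next
  case False
  have "b powr r - a powr r \<ge> 0" using False ab r by (simp add: powr_mono2)
  then show ?thesis using S1[OF r ab(1), of b] ab False by (simp add: mz_nonneg add.commute abs_minus_commute)
qed

lemma mz_upper_opp:
  fixes a b r :: real assumes r: "1 \<le> r" and ab: "0 \<le> a" "b \<le> 0"
  shows "\<bar>mz r a - mz r b\<bar> \<le> r * \<bar>a - b\<bar> * GG r a b"
proof -
  have "mz r a - mz r b = a powr r + (- b) powr r" using ab by (simp add: mz_nonneg mz_nonpos)
  moreover have "\<bar>a - b\<bar> = a + (- b)" using ab by simp
  moreover have "\<bar>b\<bar> = - b" "\<bar>a\<bar> = a" using ab by auto
  ultimately show ?thesis using S2[OF r ab(1), of "- b"] ab by simp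
qed

lemma mz_neg: "mz r (- t) = - mz r t"
  unfolding mz_def by simp

lemma mz_upper:
  fixes a b r :: real assumes r: "1 \<le> r"
  shows "\<bar>mz r a - mz r b\<bar> \<le> r * \<bar>a - b\<bar> * GG r a b"
proof -
  consider "0 \<le> a" "0 \<le> b" | "a \<le> 0" "b \<le> 0" | "0 \<le> a" "b \<le> 0" | "a \<le> 0" "0 \<le> b" by linarith
  then show ?thesis
  proof cases
    case 1 then show ?thesis using mz_upper_pos[OF r] by blast
  next
    case 2
    have "\<bar>mz r (-a) - mz r (-b)\<bar> \<le> r * \<bar>(-a) - (-b)\<bar> * GG r (-a) (-b)"
      using mz_upper_pos[OF r, of "-a" "-b"] 2 by simp
    then show ?thesis by (simp add: mz_neg abs_minus_commute)
  next
    case 3 then show ?thesis using mz_upper_opp[OF r] by blast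
  next
    case 4
    have "\<bar>mz r b - mz r a\<bar> \<le> r * \<bar>b - a\<bar> * GG r b a"
      using mz_upper_opp[OF r, of b a] 4 by simp
    then show ?thesis by (simp add: abs_minus_commute add.commute)
  qed
qed

lemma mz_lower_pos:
  fixes a b r :: real assumes r: "1 \<le> r" and ab: "0 \<le> b" "b \<le> a"
  shows "2 powr (1 - r) * \<bar>a - b\<bar> powr r \<le> \<bar>mz r a - mz r b\<bar>"
proof -
  have "(a - b) powr r + b powr r \<le> a powr r" using superadd_powr[OF r, of "a - b" b] ab by simp
  moreover have "2 powr (1 - r) \<le> 2 powr 0" using r by (intro powr_mono) auto
  then have "2 powr (1 - r) \<le> 1" by simp
  then have "2 powr (1 - r) * (a - b) powr r \<le> 1 * (a - b) powr r" by (intro mult_right_mono) auto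
  ultimately show ?thesis using ab by (simp add: mz_nonneg)
qed

lemma mz_lower_opp:
  fixes a b r :: real assumes r: "1 \<le> r" and ab: "0 \<le> a" "b \<le> 0"
  shows "2 powr (1 - r) * \<bar>a - b\<bar> powr r \<le> \<bar>mz r a - mz r b\<bar>"
proof -
  have m: "((a + - b) / 2) powr r \<le> (a powr r + (- b) powr r) / 2"
    using midconv_ge1[OF r, of a "- b"] ab by simp
  have "((a + - b) / 2) powr r = (a - b) powr r / 2 powr r" using ab by (simp add: powr_divide)
  moreover have "2 powr (1 - r) = 2 / 2 powr r" by (simp add: powr_diff)
  ultimately have eq: "2 powr (1 - r) * (a - b) powr r = 2 * ((a + - b) / 2) powr r"
    by simp
  have m2: "2 * ((a + - b) / 2) powr r \<le> a powr r + (- b) powr r" using m by simp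
  have "2 powr (1 - r) * (a - b) powr r \<le> a powr r + (- b) powr r"
    unfolding eq by (rule m2)
  moreover have "mz r a - mz r b = a powr r + (- b) powr r" using ab by (simp add: mz_nonneg mz_nonpos)
  moreover have "\<bar>a - b\<bar> = a - b" using ab by simp
  moreover have "a powr r + (- b) powr r \<ge> 0" by simp
  ultimately show ?thesis by simp
qed

lemma mz_lower:
  fixes a b r :: real assumes r: "1 \<le> r"
  shows "2 powr (1 - r) * \<bar>a - b\<bar> powr r \<le> \<bar>mz r a - mz r b\<bar>"
proof -
  have sym: "2 powr (1 - r) * \<bar>a - b\<bar> powr r \<le> \<bar>mz r a - mz r b\<bar>" if "b \<le> a" for a b
  proof -
    consider "0 \<le> b" | "a \<le> 0" | "b \<le> 0" "0 \<le> a" by linarith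
    then show ?thesis
    proof cases
      case 1 then show ?thesis using mz_lower_pos[OF r 1 that] by simp
    next
      case 2
      have "2 powr (1 - r) * \<bar>(-b) - (-a)\<bar> powr r \<le> \<bar>mz r (-b) - mz r (-a)\<bar>"
        using mz_lower_pos[OF r, of "-a" "-b"] 2 that by simp
      then show ?thesis by (simp add: mz_neg abs_minus_commute)
    next
      case 3 then show ?thesis using mz_lower_opp[OF r 3(2) 3(1)] by simp
    qed
  qed
  show ?thesis
  proof (cases "b \<le> a")
    case True then show ?thesis using sym by blast
  next
    case False
    then show ?thesis using sym[of a b] by (simp add: abs_minus_commute)
  qed
qed

definition Mz :: "real \<Rightarrow> (nat \<Rightarrow> real) \<Rightarrow> nat \<Rightarrow> real" where
  "Mz r x = (\<lambda>i. mz r (x i))"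

lemma Mz_lp:
  assumes "p = r * q" "x \<in> lp_space p"
  shows "Mz r x \<in> lp_space q"
proof -
  have "\<bar>Mz r x i\<bar> powr q = \<bar>x i\<bar> powr p" for i
    unfolding Mz_def mz_abs assms(1) by (simp add: powr_powr)
  then show ?thesis using assms(2) unfolding lp_space_iff by simp
qed

lemma Mz_lower:
  assumes r: "1 \<le> r" and q: "q > 0" and p: "p = r * q" and x: "x \<in> lp_space p" and y: "y \<in> lp_space p"
  shows "2 powr (1 - r) * lpn p (\<lambda>i. x i - y i) powr r \<le> lpn q (\<lambda>i. Mz r x i - Mz r y i)"
proof -
  define D where "D = (\<lambda>i. \<bar>Mz r x i - Mz r y i\<bar>)"
  define E where "E = (\<lambda>i. \<bar>x i - y i\<bar>)"
  have pp: "p > 0" using r q p by (simp add: mult_pos_pos)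
  have sD: "summable (\<lambda>i. D i powr q)"
    using lp_minus[OF q Mz_lp[OF p x] Mz_lp[OF p y]] unfolding D_def lp_space_iff .
  have sE: "summable (\<lambda>i. E i powr p)"
    using lp_minus[OF pp x y] unfolding E_def lp_space_iff .
  have pt: "(2 powr (1 - r)) powr q * E i powr p \<le> D i powr q" for i
  proof -
    have "2 powr (1 - r) * E i powr r \<le> D i" unfolding D_def E_def Mz_def by (rule mz_lower[OF r])
    then have "(2 powr (1 - r) * E i powr r) powr q \<le> D i powr q" using q by (intro powr_mono2) auto
    also have "(2 powr (1 - r) * E i powr r) powr q = (2 powr (1 - r)) powr q * E i powr p"
      unfolding p by (simp add: powr_mult powr_powr E_def)
    finally show ?thesis .
  qed
  have "(\<Sum>i. (2 powr (1 - r)) powr q * E i powr p) \<le> (\<Sum>i. D i powr q)"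
    using pt sD sE by (intro suminf_le summable_mult) auto
  then have le: "(2 powr (1 - r)) powr q * (\<Sum>i. E i powr p) \<le> (\<Sum>i. D i powr q)"
    using sE by (simp add: suminf_mult)
  have SE0: "(\<Sum>i. E i powr p) \<ge> 0" by (intro suminf_nonneg sE) simp
  have "((2 powr (1 - r)) powr q * (\<Sum>i. E i powr p)) powr (1/q) \<le> (\<Sum>i. D i powr q) powr (1/q)"
    using le q SE0 by (intro powr_mono2) auto
  moreover have "((2 powr (1 - r)) powr q * (\<Sum>i. E i powr p)) powr (1/q) = 2 powr (1 - r) * (\<Sum>i. E i powr p) powr (1/q)"
    using q SE0 by (simp add: powr_mult powr_powr)
  moreover have "lpn p (\<lambda>i. x i - y i) powr r = (\<Sum>i. E i powr p) powr (1/q)"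
    unfolding lpn_def E_def using SE0 p r q unfolding E_def by (simp add: powr_powr)
  moreover have "lpn q (\<lambda>i. Mz r x i - Mz r y i) = (\<Sum>i. D i powr q) powr (1/q)"
    unfolding lpn_def D_def ..
  ultimately show ?thesis by simp
qed

lemma Mz_upper:
  assumes r: "1 < r" and q: "1 \<le> q" and p: "p = r * q" and x: "x \<in> lp_space p" and y: "y \<in> lp_space p"
    and R: "lpn p x \<le> R" "lpn p y \<le> R"
  shows "lpn q (\<lambda>i. Mz r x i - Mz r y i) \<le> r * R powr (r - 1) * lpn p (\<lambda>i. x i - y i)"
proof -
  define D where "D = (\<lambda>i. \<bar>Mz r x i - Mz r y i\<bar>)"
  define E where "E = (\<lambda>i. \<bar>x i - y i\<bar>)"
  define G where "G = (\<lambda>i. GG r (x i) (y i))"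
  have q0: "q > 0" using q by simp
  have pp: "p > 0" using r q p by (simp add: mult_pos_pos)
  have R0: "R \<ge> 0" using R(1) lpn_nonneg[of p x] by simp
  define t where "t = r / (r - 1)"
  have st: "r > 1" "t > 1" "1/r + 1/t = 1" using r unfolding t_def by (auto simp: field_simps)
  have sD: "summable (\<lambda>i. D i powr q)"
    using lp_minus[OF q0 Mz_lp[OF p x] Mz_lp[OF p y]] unfolding D_def lp_space_iff .
  have sE: "summable (\<lambda>i. E i powr p)"
    using lp_minus[OF pp x y] unfolding E_def lp_space_iff .
  have sx: "summable (\<lambda>i. \<bar>x i\<bar> powr p)" using x unfolding lp_space_iff .
  have sy: "summable (\<lambda>i. \<bar>y i\<bar> powr p)" using y unfolding lp_space_iff .
  have u_r: "(E i powr q) powr r = E i powr p" for i unfolding p by (simp add: powr_powr mult.commute)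
  have v_t: "(G i powr q) powr t \<le> (\<bar>x i\<bar> powr p + \<bar>y i\<bar> powr p) / 2" for i
  proof -
    have "(G i powr q) powr t = ((\<bar>x i\<bar> powr r + \<bar>y i\<bar> powr r) / 2) powr q"
      unfolding G_def t_def using r by (simp add: powr_powr)
    also have "\<dots> \<le> ((\<bar>x i\<bar> powr r) powr q + (\<bar>y i\<bar> powr r) powr q) / 2"
      by (rule midconv_ge1[OF q]) auto
    also have "(\<bar>x i\<bar> powr r) powr q = \<bar>x i\<bar> powr p" unfolding p by (simp add: powr_powr)
    also have "(\<bar>y i\<bar> powr r) powr q = \<bar>y i\<bar> powr p" unfolding p by (simp add: powr_powr)
    finally show ?thesis .
  qed
  have sxy: "summable (\<lambda>i. (\<bar>x i\<bar> powr p + \<bar>y i\<bar> powr p) / 2)"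
    using sx sy by (intro summable_divide summable_add)
  have sv: "summable (\<lambda>i. (G i powr q) powr t)"
    by (rule summable_comparison_test[OF _ sxy]) (use v_t in auto)
  have su: "summable (\<lambda>i. (E i powr q) powr r)" unfolding u_r by (rule sE)
  have H: "summable (\<lambda>i. E i powr q * G i powr q) \<and>
     (\<Sum>i. E i powr q * G i powr q) \<le> (\<Sum>i. (E i powr q) powr r) powr (1/r) * (\<Sum>i. (G i powr q) powr t) powr (1/t)"
    by (rule holder_series[OF st _ _ su sv]) auto
  have pt: "D i powr q \<le> r powr q * (E i powr q * G i powr q)" for i
  proof -
    have "D i \<le> r * E i * G i" unfolding D_def E_def G_def Mz_def using mz_upper[of r] r by simp
    then have "D i powr q \<le> (r * E i * G i) powr q" using q0 D_def by (intro powr_mono2) auto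
    also have "\<dots> = r powr q * (E i powr q * G i powr q)" using r E_def G_def by (simp add: powr_mult)
    finally show ?thesis .
  qed
  have "(\<Sum>i. D i powr q) \<le> (\<Sum>i. r powr q * (E i powr q * G i powr q))"
    using pt sD H by (intro suminf_le summable_mult) auto
  also have "\<dots> = r powr q * (\<Sum>i. E i powr q * G i powr q)" using H by (intro suminf_mult) auto
  finally have l1: "(\<Sum>i. D i powr q) \<le> r powr q * (\<Sum>i. E i powr q * G i powr q)" .
  define SE where "SE = (\<Sum>i. E i powr p)"
  have SE0: "SE \<ge> 0" unfolding SE_def by (intro suminf_nonneg sE) simp
  have SV: "(\<Sum>i. (G i powr q) powr t) \<le> R powr p"
  proof -
    have "(\<Sum>i. (G i powr q) powr t) \<le> (\<Sum>i. (\<bar>x i\<bar> powr p + \<bar>y i\<bar> powr p) / 2)"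
      by (rule suminf_le[OF v_t sv sxy])
    also have "\<dots> = ((\<Sum>i. \<bar>x i\<bar> powr p) + (\<Sum>i. \<bar>y i\<bar> powr p)) / 2"
    proof -
      have "(\<Sum>i. (\<bar>x i\<bar> powr p + \<bar>y i\<bar> powr p) / 2) = (\<Sum>i. \<bar>x i\<bar> powr p + \<bar>y i\<bar> powr p) / 2"
        by (rule suminf_divide[OF summable_add[OF sx sy]])
      also have "(\<Sum>i. \<bar>x i\<bar> powr p + \<bar>y i\<bar> powr p) = (\<Sum>i. \<bar>x i\<bar> powr p) + (\<Sum>i. \<bar>y i\<bar> powr p)"
        by (rule suminf_add[OF sx sy, symmetric])
      finally show ?thesis .
    qed
    also have "(\<Sum>i. \<bar>x i\<bar> powr p) = lpn p x powr p" using lpn_powr[OF pp x] by simp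
    also have "(\<Sum>i. \<bar>y i\<bar> powr p) = lpn p y powr p" using lpn_powr[OF pp y] by simp
    also have "lpn p x powr p \<le> R powr p" using R pp lpn_nonneg[of p x] by (intro powr_mono2) auto
    also have "lpn p y powr p \<le> R powr p" using R pp lpn_nonneg[of p y] by (intro powr_mono2) auto
    finally show ?thesis by simp
  qed
  have SV0: "(\<Sum>i. (G i powr q) powr t) \<ge> 0" by (intro suminf_nonneg sv) simp
  have l2: "(\<Sum>i. E i powr q * G i powr q) \<le> SE powr (1/r) * (R powr p) powr (1/t)"
  proof -
    have "(\<Sum>i. (G i powr q) powr t) powr (1/t) \<le> (R powr p) powr (1/t)"
      using SV SV0 st by (intro powr_mono2) auto
    then have "SE powr (1/r) * (\<Sum>i. (G i powr q) powr t) powr (1/t) \<le> SE powr (1/r) * (R powr p) powr (1/t)"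
      by (intro mult_left_mono) auto
    then show ?thesis using H unfolding u_r SE_def by linarith
  qed
  have l3: "(\<Sum>i. D i powr q) \<le> r powr q * (SE powr (1/r) * (R powr p) powr (1/t))"
  proof -
    have "r powr q * (\<Sum>i. E i powr q * G i powr q) \<le> r powr q * (SE powr (1/r) * (R powr p) powr (1/t))"
      using l2 by (intro mult_left_mono) auto
    then show ?thesis using l1 by linarith
  qed
  have SD0: "(\<Sum>i. D i powr q) \<ge> 0" by (intro suminf_nonneg sD) simp
  have "(\<Sum>i. D i powr q) powr (1/q) \<le> (r powr q * (SE powr (1/r) * (R powr p) powr (1/t))) powr (1/q)"
    using l3 SD0 q0 by (intro powr_mono2) auto
  also have "\<dots> = r * (SE powr (1/p) * R powr (r - 1))"
  proof -
    have "(r powr q * (SE powr (1/r) * (R powr p) powr (1/t))) powr (1/q)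
        = (r powr q) powr (1/q) * ((SE powr (1/r)) powr (1/q) * ((R powr p) powr (1/t)) powr (1/q))"
      by (simp add: powr_mult)
    also have "(r powr q) powr (1/q) = r" using q0 r by (simp add: powr_powr)
    also have "(SE powr (1/r)) powr (1/q) = SE powr (1/p)" unfolding p by (simp add: powr_powr)
    also have "((R powr p) powr (1/t)) powr (1/q) = R powr (r - 1)"
    proof -
      have "p * (1/t) * (1/q) = r - 1" unfolding p t_def using r q0 by (simp add: field_simps)
      then show ?thesis by (simp add: powr_powr)
    qed
    finally show ?thesis .
  qed
  finally have "(\<Sum>i. D i powr q) powr (1/q) \<le> r * (SE powr (1/p) * R powr (r - 1))" .
  moreover have "lpn q (\<lambda>i. Mz r x i - Mz r y i) = (\<Sum>i. D i powr q) powr (1/q)"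
    unfolding lpn_def D_def ..
  moreover have "lpn p (\<lambda>i. x i - y i) = SE powr (1/p)" unfolding lpn_def SE_def E_def ..
  ultimately show ?thesis by (simp add: algebra_simps)
qed

lemma decomp_mono:
  assumes "lipschitz_decomp d M \<beta> \<Delta> D" "\<beta> \<le> \<beta>'" "\<Delta> > 0" "\<And>x y. x \<in> M \<Longrightarrow> y \<in> M \<Longrightarrow> d x y \<ge> 0"
  shows "lipschitz_decomp d M \<beta>' \<Delta> D"
proof -
  have "\<beta> * d x y / \<Delta> \<le> \<beta>' * d x y / \<Delta>" if "x \<in> M" "y \<in> M" for x y
    using assms(2,3) assms(4)[OF that] by (intro divide_right_mono mult_right_mono) auto
  then show ?thesis using assms(1) unfolding lipschitz_decomp_def by (meson order_trans)
qed

lemma relpow_dist: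
  assumes R: "R = {(x, y). x \<in> T \<and> y \<in> T \<and> d x y < \<delta>}"
    and self: "\<And>x. x \<in> T \<Longrightarrow> d x x = 0"
    and tri: "\<And>x y z. x \<in> T \<Longrightarrow> y \<in> T \<Longrightarrow> z \<in> T \<Longrightarrow> d x z \<le> d x y + d y z"
  shows "(x, y) \<in> R ^^ k \<Longrightarrow> x \<in> T \<Longrightarrow> y \<in> T \<and> d x y \<le> real k * \<delta>"
proof (induction k arbitrary: y)
  case 0
  then show ?case using self by simp
next
  case (Suc k)
  from Suc.prems(1) obtain z where z: "(x, z) \<in> R ^^ k" "(z, y) \<in> R" by (rule relpow_Suc_E)
  from Suc.IH[OF z(1) Suc.prems(2)] have zT: "z \<in> T" "d x z \<le> real k * \<delta>" by auto
  from z(2) R have yT: "y \<in> T" "d z y < \<delta>" by auto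
  have "d x y \<le> d x z + d z y" using tri Suc.prems(2) zT yT by blast
  then show ?case using zT yT by (simp add: algebra_simps)
qed

lemma generic_decomp:
  fixes d :: "'a \<Rightarrow> 'a \<Rightarrow> real"
  assumes fin: "finite T" and Dp: "\<Delta> > 0"
    and nonneg: "\<And>x y. x \<in> T \<Longrightarrow> y \<in> T \<Longrightarrow> d x y \<ge> 0"
    and self: "\<And>x. x \<in> T \<Longrightarrow> d x x = 0"
    and sym: "\<And>x y. x \<in> T \<Longrightarrow> y \<in> T \<Longrightarrow> d x y = d y x"
    and tri: "\<And>x y z. x \<in> T \<Longrightarrow> y \<in> T \<Longrightarrow> z \<in> T \<Longrightarrow> d x z \<le> d x y + d y z"
  shows "\<exists>D. lipschitz_decomp d T (real (card T) ^ 2 + 1) \<Delta> D"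
proof -
  define K where "K = real (card T) ^ 2 + 1"
  have K: "K > 0" unfolding K_def by (smt (verit) zero_le_power2)
  define \<delta> where "\<delta> = \<Delta> / K"
  have \<delta>: "\<delta> > 0" unfolding \<delta>_def using K Dp by simp
  define R where "R = {(x, y). x \<in> T \<and> y \<in> T \<and> d x y < \<delta>}"
  define E where "E = Id_on T \<union> R\<^sup>+"
  have RT: "R \<subseteq> T \<times> T" unfolding R_def by auto
  have finR: "finite R" using RT fin by (meson finite_SigmaI finite_subset)
  have symR: "sym R" unfolding R_def sym_def using sym by auto
  have ET: "E \<subseteq> T \<times> T" unfolding E_def using trancl_subset_Sigma[OF RT] by auto
  have eq: "equiv T E"
  proof (rule equivI)
    show "E \<subseteq> T \<times> T" by (rule ET)
    show "refl_on T E" unfolding refl_on_def E_def using ET E_def by auto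
    show "sym E" unfolding E_def using sym_trancl[OF symR] by (auto simp: sym_def)
    show "trans E" unfolding E_def trans_def by (auto intro: trancl_trans)
  qed
  have dE: "d x y \<le> \<Delta>" if "(x, y) \<in> E" for x y
  proof (cases "x = y")
    case True
    then show ?thesis using self that ET Dp by auto
  next
    case False
    then have "(x, y) \<in> R\<^sup>+" using that unfolding E_def by auto
    then obtain k where k: "0 < k" "k \<le> card R" "(x, y) \<in> R ^^ k"
      using trancl_finite_eq_relpow[OF finR] by auto
    have xT: "x \<in> T" using that ET by auto
    have "d x y \<le> real k * \<delta>" using relpow_dist[OF R_def self tri k(3) xT] by simp
    also have "real k \<le> real (card T) ^ 2"
    proof -
      have "card R \<le> card (T \<times> T)" using RT fin by (intro card_mono) auto
      then have "k \<le> card T * card T" using k(2) by (simp add: card_cartesian_product)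
      then show ?thesis by (simp add: power2_eq_square) (metis of_nat_le_iff of_nat_mult)
    qed
    then have "real k * \<delta> \<le> real (card T) ^ 2 * \<delta>" using \<delta> by (intro mult_right_mono) auto
    also have "\<dots> \<le> K * \<delta>" using \<delta> unfolding K_def by (intro mult_right_mono) auto
    also have "K * \<delta> = \<Delta>" unfolding \<delta>_def using K by simp
    finally show ?thesis .
  qed
  define P where "P = T // E"
  have part: "partition_on T P" unfolding P_def by (rule partition_on_quotient[OF eq])
  have inC: "(x, y) \<in> E" if "C \<in> P" "x \<in> C" "y \<in> C" for C x y
  proof -
    from that(1) obtain z where z: "z \<in> T" "C = E `` {z}" unfolding P_def quotient_def by auto
    then have "(z, x) \<in> E" "(z, y) \<in> E" using that by auto
    then show ?thesis using eq unfolding equiv_def sym_def trans_def by blast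
  qed
  have sepE: "\<exists>C\<in>P. x \<in> C \<and> y \<in> C" if "(x, y) \<in> E" for x y
  proof -
    have xT: "x \<in> T" using that ET by auto
    have "(x, x) \<in> E" using xT unfolding E_def by auto
    then show ?thesis using that xT unfolding P_def quotient_def by auto
  qed
  have "lipschitz_decomp d T K \<Delta> (return_pmf P)"
    unfolding lipschitz_decomp_def
  proof (rule conjI; intro ballI)
    fix P' assume "P' \<in> set_pmf (return_pmf P)"
    then have P': "P' = P" by simp
    show "partition_on T P' \<and> (\<forall>C\<in>P'. \<forall>x\<in>C. \<forall>y\<in>C. d x y \<le> \<Delta>)"
      using part inC dE unfolding P' by blast
  next
    fix x y assume xy: "x \<in> T" "y \<in> T"
    show "measure_pmf.prob (return_pmf P) {P. \<not> (\<exists>C\<in>P. x \<in> C \<and> y \<in> C)} \<le> K * d x y / \<Delta>"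
    proof (cases "(x, y) \<in> E")
      case True
      then have "measure_pmf.prob (return_pmf P) {P. \<not> (\<exists>C\<in>P. x \<in> C \<and> y \<in> C)} = 0"
        using sepE by (simp add: indicator_def)
      then show ?thesis using K nonneg[OF xy] Dp by simp
    next
      case False
      then have "(x, y) \<notin> R" unfolding E_def by auto
      then have "d x y \<ge> \<delta>" unfolding R_def using xy by auto
      then have "K * \<delta> \<le> K * d x y" using K by (intro mult_left_mono) auto
      then have "1 \<le> K * d x y / \<Delta>" unfolding \<delta>_def using K Dp by simp
      moreover have "measure_pmf.prob (return_pmf P) {P. \<not> (\<exists>C\<in>P. x \<in> C \<and> y \<in> C)} \<le> 1" by simp
      ultimately show ?thesis by linarith
    qed
  qed
  then show ?thesis unfolding K_def by blast
qed

definition Fset :: "('a \<Rightarrow> 'a \<Rightarrow> real) \<Rightarrow> 'a set \<Rightarrow> real set" where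
  "Fset d S = {\<beta>. \<beta> \<ge> 1 \<and> (\<forall>\<Delta>>0. \<forall>M'. M' \<subseteq> S \<and> finite M' \<longrightarrow> (\<exists>D. lipschitz_decomp d M' \<beta> \<Delta> D))}"

lemma beta_star_Fset: "beta_star d S = Inf (Fset d S)"
  unfolding beta_star_def Fset_def ..

lemma lpq_generic:
  assumes q: "q > 1" and S: "S \<subseteq> lp_space q" "finite S"
  shows "real (card S) ^ 2 + 1 \<in> Fset (lp_dist q) S"
  unfolding Fset_def
proof (intro CollectI conjI allI impI)
  show "1 \<le> real (card S) ^ 2 + 1" by simp
  fix \<Delta> :: real and M' assume D: "\<Delta> > 0" and M': "M' \<subseteq> S \<and> finite M'"
  have MT: "M' \<subseteq> lp_space q" using M' S by auto
  obtain D where Dd: "lipschitz_decomp (lp_dist q) M' (real (card M') ^ 2 + 1) \<Delta> D"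
  proof -
    have "\<exists>D. lipschitz_decomp (lp_dist q) M' (real (card M') ^ 2 + 1) \<Delta> D"
    proof (rule generic_decomp)
      show "finite M'" using M' by simp
      show "\<Delta> > 0" by (rule D)
      show "\<And>x y. lp_dist q x y \<ge> 0" by (rule lp_dist_nonneg)
      show "\<And>x. lp_dist q x x = 0" by (rule lp_dist_self)
      show "\<And>x y. lp_dist q x y = lp_dist q y x" by (rule lp_dist_sym)
      show "lp_dist q x z \<le> lp_dist q x y + lp_dist q y z" if "x \<in> M'" "y \<in> M'" "z \<in> M'" for x y z
        using lp_dist_triangle[OF q] that MT by blast
    qed
    then show ?thesis using that by blast
  qed
  have "card M' \<le> card S" using M' S by (intro card_mono) auto
  then have "real (card M') ^ 2 + 1 \<le> real (card S) ^ 2 + 1" by (simp add: power_mono)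
  then show "\<exists>D. lipschitz_decomp (lp_dist q) M' (real (card S) ^ 2 + 1) \<Delta> D"
    using decomp_mono[OF Dd _ D] lp_dist_nonneg by blast
qed

lemma bs_bounds:
  assumes q: "q > 1" and S: "S \<subseteq> lp_space q" "finite S"
  shows "beta_star (lp_dist q) S \<le> real (card S) ^ 2 + 1" "1 \<le> beta_star (lp_dist q) S"
proof -
  have bb: "bdd_below (Fset (lp_dist q) S)" unfolding Fset_def by (rule bdd_belowI[of _ 1]) auto
  have mem: "real (card S) ^ 2 + 1 \<in> Fset (lp_dist q) S" by (rule lpq_generic[OF q S])
  show "beta_star (lp_dist q) S \<le> real (card S) ^ 2 + 1"
    unfolding beta_star_Fset by (rule cInf_lower[OF mem bb])
  show "1 \<le> beta_star (lp_dist q) S"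
    unfolding beta_star_Fset
  proof (rule cInf_greatest)
    show "Fset (lp_dist q) S \<noteq> {}" using mem by blast
    show "\<And>x. x \<in> Fset (lp_dist q) S \<Longrightarrow> 1 \<le> x" unfolding Fset_def by blast
  qed
qed

lemma Bn_facts:
  assumes q: "q > 1"
  shows "1 \<le> beta_star_n n (lp_dist q) (lp_space q)"
    and "\<And>S. S \<subseteq> lp_space q \<Longrightarrow> finite S \<Longrightarrow> card S \<le> n \<Longrightarrow> beta_star (lp_dist q) S \<le> beta_star_n n (lp_dist q) (lp_space q)"
proof -
  define SS where "SS = {beta_star (lp_dist q) M' | M'. M' \<subseteq> lp_space q \<and> finite M' \<and> card M' \<le> n}"
  have Bdef: "beta_star_n n (lp_dist q) (lp_space q) = Sup SS" unfolding beta_star_n_def SS_def ..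
  have ba: "bdd_above SS"
  proof (rule bdd_aboveI[of _ "real n ^ 2 + 1"])
    fix x assume "x \<in> SS"
    then obtain M' where M': "x = beta_star (lp_dist q) M'" "M' \<subseteq> lp_space q" "finite M'" "card M' \<le> n"
      unfolding SS_def by auto
    have "x \<le> real (card M') ^ 2 + 1" using bs_bounds(1)[OF q M'(2,3)] M'(1) by simp
    also have "\<dots> \<le> real n ^ 2 + 1" using M'(4) by (simp add: power_mono)
    finally show "x \<le> real n ^ 2 + 1" .
  qed
  show up: "\<And>S. S \<subseteq> lp_space q \<Longrightarrow> finite S \<Longrightarrow> card S \<le> n \<Longrightarrow> beta_star (lp_dist q) S \<le> beta_star_n n (lp_dist q) (lp_space q)"
    unfolding Bdef by (rule cSup_upper[OF _ ba]) (auto simp: SS_def)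
  have "1 \<le> beta_star (lp_dist q) {}" using bs_bounds(2)[OF q, of "{}"] by simp
  also have "\<dots> \<le> beta_star_n n (lp_dist q) (lp_space q)" by (rule up) auto
  finally show "1 \<le> beta_star_n n (lp_dist q) (lp_space q)" .
qed

lemma decomp_exists:
  assumes q: "q > 1" and S: "S \<subseteq> lp_space q" "finite S" "card S \<le> n"
    and b: "beta_star_n n (lp_dist q) (lp_space q) < \<beta>2" and D: "\<Delta> > 0"
  shows "\<exists>D. lipschitz_decomp (lp_dist q) S \<beta>2 \<Delta> D"
proof -
  have "Inf (Fset (lp_dist q) S) < \<beta>2"
    using Bn_facts(2)[OF q S] b unfolding beta_star_Fset by linarith
  moreover have "Fset (lp_dist q) S \<noteq> {}" using lpq_generic[OF q S(1,2)] by auto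
  ultimately obtain \<beta>0 where b0: "\<beta>0 \<in> Fset (lp_dist q) S" "\<beta>0 < \<beta>2" using cInf_lessD by blast
  then obtain D0 where "lipschitz_decomp (lp_dist q) S \<beta>0 \<Delta> D0" unfolding Fset_def using D S by blast
  from decomp_mono[OF this _ D] b0 lp_dist_nonneg show ?thesis by (meson less_imp_le)
qed

definition sepset :: "'a \<Rightarrow> 'a \<Rightarrow> 'a set set set" where
  "sepset x y = {P. \<not> (\<exists>C\<in>P. x \<in> C \<and> y \<in> C)}"

lemma pullback_partition:
  assumes "partition_on (f ` C) Q"
  shows "partition_on C ((\<lambda>A. C \<inter> f -` A) ` Q)"
proof (rule partition_onI)
  have U: "\<Union>Q = f ` C" using assms by (simp add: partition_on_def)
  show "\<Union>((\<lambda>A. C \<inter> f -` A) ` Q) = C"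
  proof
    show "\<Union>((\<lambda>A. C \<inter> f -` A) ` Q) \<subseteq> C" by auto
    show "C \<subseteq> \<Union>((\<lambda>A. C \<inter> f -` A) ` Q)"
    proof
      fix x assume "x \<in> C"
      then have "f x \<in> \<Union>Q" using U by auto
      then obtain A where "A \<in> Q" "f x \<in> A" by auto
      then show "x \<in> \<Union>((\<lambda>A. C \<inter> f -` A) ` Q)" using \<open>x \<in> C\<close> by auto
    qed
  qed
  show "disjnt p q" if hp: "p \<in> (\<lambda>A. C \<inter> f -` A) ` Q" and hq: "q \<in> (\<lambda>A. C \<inter> f -` A) ` Q" and ne: "p \<noteq> q" for p q
  proof -
    obtain A1 where A1: "A1 \<in> Q" "p = C \<inter> f -` A1" using hp by auto
    obtain A2 where A2: "A2 \<in> Q" "q = C \<inter> f -` A2" using hq by auto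
    have "A1 \<noteq> A2" using A1 A2 ne by auto
    then show ?thesis using pairwiseD[OF partition_onD2[OF assms] A1(1) A2(1)] A1(2) A2(2) unfolding disjnt_def by auto
  qed
  show "{} \<notin> (\<lambda>A. C \<inter> f -` A) ` Q"
  proof
    assume "{} \<in> (\<lambda>A. C \<inter> f -` A) ` Q"
    then obtain A where A: "A \<in> Q" "C \<inter> f -` A = {}" by auto
    have "A \<noteq> {}" using assms A(1) unfolding partition_on_def by auto
    then obtain z where "z \<in> A" by auto
    moreover have "A \<subseteq> f ` C" using A(1) U by auto
    ultimately obtain x where "x \<in> C" "f x = z" by auto
    then show False using A(2) \<open>z \<in> A\<close> by auto
  qed
qed

lemma pullback_decomp:
  assumes L: "lipschitz_decomp d' (f ` C) \<beta> \<Delta> D"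
  shows "lipschitz_decomp (\<lambda>x y. d' (f x) (f y)) C \<beta> \<Delta> (map_pmf (\<lambda>Q. (\<lambda>A. C \<inter> f -` A) ` Q) D)"
  unfolding lipschitz_decomp_def
proof (rule conjI; intro ballI)
  fix P assume "P \<in> set_pmf (map_pmf (\<lambda>Q. (\<lambda>A. C \<inter> f -` A) ` Q) D)"
  then obtain Q where Q: "Q \<in> set_pmf D" "P = (\<lambda>A. C \<inter> f -` A) ` Q" by auto
  have pQ: "partition_on (f ` C) Q" and dQ: "\<forall>A\<in>Q. \<forall>u\<in>A. \<forall>v\<in>A. d' u v \<le> \<Delta>"
    using L Q(1) unfolding lipschitz_decomp_def by auto
  show "partition_on C P \<and> (\<forall>B\<in>P. \<forall>x\<in>B. \<forall>y\<in>B. d' (f x) (f y) \<le> \<Delta>)"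
    using pullback_partition[OF pQ] dQ Q(2) by auto
next
  fix x y assume xy: "x \<in> C" "y \<in> C"
  have "(\<lambda>Q. (\<lambda>A. C \<inter> f -` A) ` Q) -` {P. \<not> (\<exists>B\<in>P. x \<in> B \<and> y \<in> B)} = {Q. \<not> (\<exists>A\<in>Q. f x \<in> A \<and> f y \<in> A)}"
    using xy by auto
  then have "measure_pmf.prob (map_pmf (\<lambda>Q. (\<lambda>A. C \<inter> f -` A) ` Q) D) {P. \<not> (\<exists>B\<in>P. x \<in> B \<and> y \<in> B)}
      = measure_pmf.prob D {Q. \<not> (\<exists>A\<in>Q. f x \<in> A \<and> f y \<in> A)}" by simp
  also have "\<dots> \<le> \<beta> * d' (f x) (f y) / \<Delta>" using L xy unfolding lipschitz_decomp_def by auto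
  finally show "measure_pmf.prob (map_pmf (\<lambda>Q. (\<lambda>A. C \<inter> f -` A) ` Q) D) {P. \<not> (\<exists>B\<in>P. x \<in> B \<and> y \<in> B)}
      \<le> \<beta> * d' (f x) (f y) / \<Delta>" .
qed

lemma union_partition:
  assumes P: "partition_on M P" and g: "\<And>C. C \<in> P \<Longrightarrow> partition_on C (g C)"
  shows "partition_on M (\<Union>C\<in>P. g C)"
proof (rule partition_onI)
  have "\<Union>(\<Union>C\<in>P. g C) = (\<Union>C\<in>P. \<Union>(g C))" by auto
  also have "\<dots> = (\<Union>C\<in>P. C)" using g by (simp add: partition_on_def)
  also have "\<dots> = M" using P by (simp add: partition_on_def)
  finally show "\<Union>(\<Union>C\<in>P. g C) = M" .
  show "{} \<notin> (\<Union>C\<in>P. g C)" using g unfolding partition_on_def by auto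
  show "disjnt p q" if hp: "p \<in> (\<Union>C\<in>P. g C)" and hq: "q \<in> (\<Union>C\<in>P. g C)" and ne: "p \<noteq> q" for p q
  proof -
    obtain C1 where C1: "C1 \<in> P" "p \<in> g C1" using hp by auto
    obtain C2 where C2: "C2 \<in> P" "q \<in> g C2" using hq by auto
    have p1: "p \<subseteq> C1" using g[OF C1(1)] C1(2) unfolding partition_on_def by auto
    have q2: "q \<subseteq> C2" using g[OF C2(1)] C2(2) unfolding partition_on_def by auto
    show ?thesis
    proof (cases "C1 = C2")
      case True
      then show ?thesis using pairwiseD[OF partition_onD2[OF g[OF C1(1)]], of p q] C1 C2 ne by simp
    next
      case False
      then have "disjnt C1 C2" using pairwiseD[OF partition_onD2[OF P] C1(1) C2(1)] by simp
      then show ?thesis using p1 q2 unfolding disjnt_def by auto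
    qed
  qed
qed

lemma Pi_support:
  assumes "finite P" "g \<in> set_pmf (Pi_pmf P dflt DC)" "C \<in> P"
  shows "g C \<in> set_pmf (DC C)"
  using assms set_Pi_pmf[OF assms(1), of dflt DC] unfolding PiE_dflt_def by auto

lemma compose_support:
  fixes d :: "'a \<Rightarrow> 'a \<Rightarrow> real"
  assumes M: "finite M"
    and D1: "\<And>P. P \<in> set_pmf D1 \<Longrightarrow> partition_on M P"
    and DCp: "\<And>P C Q. P \<in> set_pmf D1 \<Longrightarrow> C \<in> P \<Longrightarrow> Q \<in> set_pmf (DC C) \<Longrightarrow>
                partition_on C Q \<and> (\<forall>B\<in>Q. \<forall>x\<in>B. \<forall>y\<in>B. d x y \<le> \<Delta>)"
    and PP: "PP \<in> set_pmf (bind_pmf D1 (\<lambda>P. map_pmf (\<lambda>g. \<Union>C\<in>P. g C) (Pi_pmf P {} DC)))"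
  shows "partition_on M PP \<and> (\<forall>B\<in>PP. \<forall>u\<in>B. \<forall>v\<in>B. d u v \<le> \<Delta>)"
proof -
  obtain P g where P: "P \<in> set_pmf D1" and g: "g \<in> set_pmf (Pi_pmf P {} DC)" and PPe: "PP = (\<Union>C\<in>P. g C)"
    using PP by auto
  have fP: "finite P" using finite_elements[OF M D1[OF P]] .
  have gC: "\<And>C. C \<in> P \<Longrightarrow> g C \<in> set_pmf (DC C)" using Pi_support[OF fP g] by blast
  have "partition_on M PP" unfolding PPe
    by (rule union_partition[OF D1[OF P]]) (use DCp[OF P] gC in blast)
  moreover have "\<forall>B\<in>PP. \<forall>u\<in>B. \<forall>v\<in>B. d u v \<le> \<Delta>"
    unfolding PPe using DCp[OF P] gC by blast
  ultimately show ?thesis by blast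
qed

lemma inner_prob:
  fixes d :: "'a \<Rightarrow> 'a \<Rightarrow> real"
  assumes M: "finite M" and P: "partition_on M P"
    and DCp: "\<And>C Q. C \<in> P \<Longrightarrow> Q \<in> set_pmf (DC C) \<Longrightarrow> partition_on C Q"
    and DCs: "\<And>C. C \<in> P \<Longrightarrow> x \<in> C \<Longrightarrow> y \<in> C \<Longrightarrow> measure_pmf.prob (DC C) (sepset x y) \<le> c"
    and c: "c \<ge> 0"
  shows "measure_pmf.prob (map_pmf (\<lambda>g. \<Union>C\<in>P. g C) (Pi_pmf P {} DC)) (sepset x y) \<le> indicator (sepset x y) P + c"
proof (cases "P \<in> sepset x y")
  case True
  then show ?thesis using c by (smt (verit) indicator_simps(1) measure_pmf.prob_le_1)
next
  case False
  then obtain C0 where C0: "C0 \<in> P" "x \<in> C0" "y \<in> C0" unfolding sepset_def by auto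
  have fP: "finite P" using finite_elements[OF M P] .
  define Pi where "Pi = Pi_pmf P {} DC"
  have eqset: "((\<lambda>g. \<Union>C\<in>P. g C) -` sepset x y) \<inter> set_pmf Pi = {g. g C0 \<in> sepset x y} \<inter> set_pmf Pi"
  proof (intro equalityI subsetI)
    fix g assume g: "g \<in> ((\<lambda>g. \<Union>C\<in>P. g C) -` sepset x y) \<inter> set_pmf Pi"
    then have n: "\<not> (\<exists>B\<in>(\<Union>C\<in>P. g C). x \<in> B \<and> y \<in> B)" unfolding sepset_def by simp
    have "\<not> (\<exists>B\<in>g C0. x \<in> B \<and> y \<in> B)"
    proof
      assume "\<exists>B\<in>g C0. x \<in> B \<and> y \<in> B"
      then obtain B where "B \<in> g C0" "x \<in> B" "y \<in> B" by blast
      then have "\<exists>B\<in>(\<Union>C\<in>P. g C). x \<in> B \<and> y \<in> B" using C0(1) by blast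
      then show False using n by blast
    qed
    then show "g \<in> {g. g C0 \<in> sepset x y} \<inter> set_pmf Pi" using g unfolding sepset_def by simp
  next
    fix g assume g: "g \<in> {g. g C0 \<in> sepset x y} \<inter> set_pmf Pi"
    have gPi: "g \<in> set_pmf (Pi_pmf P {} DC)" using g unfolding Pi_def by simp
    have gC: "partition_on C (g C)" if C: "C \<in> P" for C
      by (rule DCp[OF C Pi_support[OF fP gPi C]])
    have "\<not> (\<exists>B\<in>(\<Union>C\<in>P. g C). x \<in> B \<and> y \<in> B)"
    proof
      assume "\<exists>B\<in>(\<Union>C\<in>P. g C). x \<in> B \<and> y \<in> B"
      then obtain C B where CB: "C \<in> P" "B \<in> g C" "x \<in> B" "y \<in> B" by auto
      have "B \<subseteq> C" using gC[OF CB(1)] CB(2) unfolding partition_on_def by auto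
      then have "x \<in> C" using CB by auto
      have "C = C0"
      proof (rule ccontr)
        assume "C \<noteq> C0"
        then have "disjnt C C0" using pairwiseD[OF partition_onD2[OF P] CB(1) C0(1)] by simp
        then show False using \<open>x \<in> C\<close> C0(2) unfolding disjnt_def by auto
      qed
      then show False using g CB unfolding sepset_def by auto
    qed
    then show "g \<in> ((\<lambda>g. \<Union>C\<in>P. g C) -` sepset x y) \<inter> set_pmf Pi" using g unfolding sepset_def by auto
  qed
  have "measure_pmf.prob (map_pmf (\<lambda>g. \<Union>C\<in>P. g C) Pi) (sepset x y) = measure_pmf.prob Pi ((\<lambda>g. \<Union>C\<in>P. g C) -` sepset x y)"
    by simp
  also have "\<dots> = measure_pmf.prob Pi (((\<lambda>g. \<Union>C\<in>P. g C) -` sepset x y) \<inter> set_pmf Pi)"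
    by (rule measure_Int_set_pmf[symmetric])
  also have "\<dots> = measure_pmf.prob Pi ({g. g C0 \<in> sepset x y} \<inter> set_pmf Pi)" unfolding eqset ..
  also have "\<dots> = measure_pmf.prob Pi ({g. g C0 \<in> sepset x y})" by (rule measure_Int_set_pmf)
  also have "\<dots> = measure_pmf.prob (map_pmf (\<lambda>g. g C0) Pi) (sepset x y)" by (simp add: vimage_def)
  also have "map_pmf (\<lambda>g. g C0) Pi = DC C0" unfolding Pi_def using Pi_pmf_component[OF fP, of C0 "{}" DC] C0(1) by simp
  also have "measure_pmf.prob (DC C0) (sepset x y) \<le> c" using DCs C0 by blast
  finally show ?thesis unfolding Pi_def using False by simp
qed

lemma compose_prob:
  fixes d :: "'a \<Rightarrow> 'a \<Rightarrow> real"
  assumes M: "finite M"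
    and D1: "\<And>P. P \<in> set_pmf D1 \<Longrightarrow> partition_on M P"
    and DCp: "\<And>P C Q. P \<in> set_pmf D1 \<Longrightarrow> C \<in> P \<Longrightarrow> Q \<in> set_pmf (DC C) \<Longrightarrow> partition_on C Q"
    and DCs: "\<And>P C. P \<in> set_pmf D1 \<Longrightarrow> C \<in> P \<Longrightarrow> x \<in> C \<Longrightarrow> y \<in> C \<Longrightarrow> measure_pmf.prob (DC C) (sepset x y) \<le> c"
    and c: "c \<ge> 0"
  shows "measure_pmf.prob (bind_pmf D1 (\<lambda>P. map_pmf (\<lambda>g. \<Union>C\<in>P. g C) (Pi_pmf P {} DC))) (sepset x y)
           \<le> measure_pmf.prob D1 (sepset x y) + c"
proof -
  define F where "F = (\<lambda>P. map_pmf (\<lambda>g. \<Union>C\<in>P. g C) (Pi_pmf P {} DC))"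
  have pt: "emeasure (measure_pmf (F P)) (sepset x y) \<le> indicator (sepset x y) P + ennreal c" if P: "P \<in> set_pmf D1" for P
  proof -
    have "measure_pmf.prob (F P) (sepset x y) \<le> indicator (sepset x y) P + c"
      unfolding F_def by (rule inner_prob[OF M D1[OF P] DCp[OF P] DCs[OF P] c])
    then have "ennreal (measure_pmf.prob (F P) (sepset x y)) \<le> ennreal (indicator (sepset x y) P + c)"
      by (rule ennreal_leI)
    also have "ennreal (indicator (sepset x y) P + c) = indicator (sepset x y) P + ennreal c"
      using c by (simp add: ennreal_plus ennreal_indicator)
    finally show ?thesis by (simp add: measure_pmf.emeasure_eq_measure)
  qed
  have "ennreal (measure_pmf.prob (bind_pmf D1 F) (sepset x y)) = emeasure (measure_pmf (bind_pmf D1 F)) (sepset x y)"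
    by (simp add: measure_pmf.emeasure_eq_measure)
  also have "\<dots> = (\<integral>\<^sup>+P. emeasure (measure_pmf (F P)) (sepset x y) \<partial>measure_pmf D1)" by simp
  also have "\<dots> \<le> (\<integral>\<^sup>+P. (indicator (sepset x y) P + ennreal c) \<partial>measure_pmf D1)"
    by (intro nn_integral_mono_AE) (simp add: AE_measure_pmf_iff pt)
  also have "\<dots> = (\<integral>\<^sup>+P. indicator (sepset x y) P \<partial>measure_pmf D1) + (\<integral>\<^sup>+P. ennreal c \<partial>measure_pmf D1)"
    by (rule nn_integral_add) auto
  also have "\<dots> = emeasure (measure_pmf D1) (sepset x y) + ennreal c"
    by (simp add: measure_pmf.emeasure_space_1)
  also have "\<dots> = ennreal (measure_pmf.prob D1 (sepset x y) + c)"
    using c by (simp add: measure_pmf.emeasure_eq_measure ennreal_plus)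
  finally have "ennreal (measure_pmf.prob (bind_pmf D1 F) (sepset x y)) \<le> ennreal (measure_pmf.prob D1 (sepset x y) + c)" .
  moreover have "0 \<le> measure_pmf.prob D1 (sepset x y) + c" using c by simp
  ultimately have "measure_pmf.prob (bind_pmf D1 F) (sepset x y) \<le> measure_pmf.prob D1 (sepset x y) + c"
    using ennreal_le_iff by blast
  then show ?thesis unfolding F_def .
qed

lemma final_algebra:
  fixes \<beta> B r \<Delta> :: real
  assumes b: "\<beta> > 0" and B: "B > 0" and r: "r > 1" and D: "\<Delta> > 0"
  shows "\<beta> / ((\<beta> / (B * (r * 2 powr (r - 1)))) powr (1/r) * \<Delta>)
     + B * (r * 2 powr (r - 1)) * ((\<beta> / (B * (r * 2 powr (r - 1)))) powr (1/r)) powr (r - 1) / \<Delta>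
     = 4 * (r / 2) powr (1/r) * B powr (1/r) * \<beta> powr (1 - 1/r) / \<Delta>"
proof -
  define c where "c = r * 2 powr (r - 1)"
  define t where "t = (\<beta> / (B * c)) powr (1/r)"
  have c: "c > 0" unfolding c_def using r by simp
  have t: "t > 0" unfolding t_def using b B c by simp
  have tr: "t powr r = \<beta> / (B * c)" unfolding t_def using b B c r by (simp add: powr_powr)
  have tr1: "t powr (r - 1) = t powr r / t" using t by (simp add: powr_diff)
  have e1: "B * c * t powr (r - 1) = \<beta> / t" unfolding tr1 tr using B c t by (simp add: field_simps)
  have e2: "\<beta> / t = \<beta> powr (1 - 1/r) * (B * c) powr (1/r)"
  proof -
    have "t = \<beta> powr (1/r) / (B * c) powr (1/r)" unfolding t_def using b B c by (simp add: powr_divide)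
    moreover have "\<beta> powr (1 - 1/r) = \<beta> / \<beta> powr (1/r)" using b by (simp add: powr_diff)
    moreover have "\<beta> powr (1/r) > 0" "(B * c) powr (1/r) > 0" using b B c by auto
    ultimately have "\<beta> / t = (\<beta> / \<beta> powr (1/r)) * (B * c) powr (1/r)"
      by (simp add: divide_divide_eq_right)
    then show ?thesis using \<open>\<beta> powr (1 - 1/r) = \<beta> / \<beta> powr (1/r)\<close> by simp
  qed
  have e3: "(B * c) powr (1/r) = B powr (1/r) * r powr (1/r) * 2 powr ((r - 1) / r)"
    unfolding c_def using B r by (simp add: powr_mult powr_powr)
  have e4: "2 * 2 powr ((r - 1) / r) = 4 / 2 powr (1/r)"
  proof -
    have "2 powr ((r - 1) / r) * 2 powr (1/r) = 2 powr ((r - 1) / r + 1/r)" by (rule powr_add[symmetric])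
    also have "(r - 1) / r + 1/r = 1" using r by (simp add: field_simps)
    finally have "2 powr ((r - 1) / r) * 2 powr (1/r) = 2" by simp
    then show ?thesis by (simp add: field_simps)
  qed
  have e5: "(r / 2) powr (1/r) = r powr (1/r) / 2 powr (1/r)" using r by (simp add: powr_divide)
  have "\<beta> / (t * \<Delta>) + B * c * t powr (r - 1) / \<Delta> = 2 * (\<beta> / t) / \<Delta>"
    using e1 t D by (simp add: field_simps)
  also have "\<dots> = (2 * 2 powr ((r - 1) / r)) * B powr (1/r) * r powr (1/r) * \<beta> powr (1 - 1/r) / \<Delta>"
    unfolding e2 e3 by (simp add: algebra_simps)
  also have "\<dots> = 4 * (r / 2) powr (1/r) * B powr (1/r) * \<beta> powr (1 - 1/r) / \<Delta>"
    unfolding e4 e5 by (simp add: field_simps)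
  finally show ?thesis unfolding t_def c_def .
qed

definition psi :: "real \<Rightarrow> (nat \<Rightarrow> real) set \<Rightarrow> (nat \<Rightarrow> real) \<Rightarrow> nat \<Rightarrow> real" where
  "psi r C = (\<lambda>x. Mz r (\<lambda>i. x i - centroid C i))"

definition refineC :: "real \<Rightarrow> real \<Rightarrow> real \<Rightarrow> real \<Rightarrow> (nat \<Rightarrow> real) set \<Rightarrow> (nat \<Rightarrow> real) set set pmf" where
  "refineC q r \<beta>2 \<Delta>2 C = map_pmf (\<lambda>Q. (\<lambda>A. C \<inter> psi r C -` A) ` Q)
      (SOME D. lipschitz_decomp (lp_dist q) (psi r C ` C) \<beta>2 \<Delta>2 D)"

lemma refine_cluster:
  assumes r: "r > 1" and q: "q > 1" and p: "p = r * q"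
    and C: "C \<subseteq> lp_space p" "finite C" "C \<noteq> {}" "card C \<le> n"
    and diam: "\<And>x y. x \<in> C \<Longrightarrow> y \<in> C \<Longrightarrow> lp_dist p x y \<le> \<Delta>1"
    and D1: "\<Delta>1 > 0" and D: "\<Delta> > 0"
    and b2: "beta_star_n n (lp_dist q) (lp_space q) < \<beta>2"
    and D2: "\<Delta>2 = 2 powr (1 - r) * \<Delta> powr r"
  shows "\<forall>Q\<in>set_pmf (refineC q r \<beta>2 \<Delta>2 C). partition_on C Q \<and> (\<forall>Bk\<in>Q. \<forall>u\<in>Bk. \<forall>v\<in>Bk. lp_dist p u v \<le> \<Delta>)"
    and "\<And>x y. x \<in> C \<Longrightarrow> y \<in> C \<Longrightarrow> measure_pmf.prob (refineC q r \<beta>2 \<Delta>2 C) (sepset x y)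
            \<le> \<beta>2 * (r * ((real n - 1) / real n * \<Delta>1) powr (r - 1)) / \<Delta>2 * lp_dist p x y"
proof -
  have pp: "p > 1" using r q p by (metis less_1_mult)
  define c where "c = centroid C"
  have cl: "c \<in> lp_space p" unfolding c_def by (rule centroid_lp[OF pp C(2,1)])
  define f where "f = psi r C"
  have f_def': "f = (\<lambda>x. Mz r (\<lambda>i. x i - c i))" unfolding f_def psi_def c_def ..
  have xc: "\<And>x. x \<in> C \<Longrightarrow> (\<lambda>i. x i - c i) \<in> lp_space p" using lp_minus[of p _ c] pp C(1) cl by auto
  have fq: "f ` C \<subseteq> lp_space q" unfolding f_def' using Mz_lp[OF p] xc by auto
  have D2p: "\<Delta>2 > 0" unfolding D2 using D by simp
  have cardf: "card (f ` C) \<le> n" using card_image_le[OF C(2), of f] C(4) by linarith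
  have ex: "\<exists>D. lipschitz_decomp (lp_dist q) (f ` C) \<beta>2 \<Delta>2 D"
    by (rule decomp_exists[OF q fq finite_imageI[OF C(2)] cardf b2 D2p])
  define E where "E = (SOME D. lipschitz_decomp (lp_dist q) (f ` C) \<beta>2 \<Delta>2 D)"
  have E: "lipschitz_decomp (lp_dist q) (f ` C) \<beta>2 \<Delta>2 E" unfolding E_def using someI_ex[OF ex] .
  have R: "refineC q r \<beta>2 \<Delta>2 C = map_pmf (\<lambda>Q. (\<lambda>A. C \<inter> f -` A) ` Q) E"
    unfolding refineC_def f_def E_def ..
  have L: "lipschitz_decomp (\<lambda>x y. lp_dist q (f x) (f y)) C \<beta>2 \<Delta>2 (refineC q r \<beta>2 \<Delta>2 C)"
    unfolding R by (rule pullback_decomp[OF E])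
  have fdiff: "lp_dist q (f x) (f y) = lpn q (\<lambda>i. Mz r (\<lambda>i. x i - c i) i - Mz r (\<lambda>i. y i - c i) i)" for x y
    unfolding f_def' lp_dist_lpn ..
  have xy_eq: "(\<lambda>i. (x i - c i) - (y i - c i)) = (\<lambda>i. x i - y i)" for x y :: "nat \<Rightarrow> real"
    by auto
  show "\<forall>Q\<in>set_pmf (refineC q r \<beta>2 \<Delta>2 C). partition_on C Q \<and> (\<forall>Bk\<in>Q. \<forall>u\<in>Bk. \<forall>v\<in>Bk. lp_dist p u v \<le> \<Delta>)"
  proof
    fix Q assume Q: "Q \<in> set_pmf (refineC q r \<beta>2 \<Delta>2 C)"
    have pQ: "partition_on C Q" and dQ: "\<forall>Bk\<in>Q. \<forall>u\<in>Bk. \<forall>v\<in>Bk. lp_dist q (f u) (f v) \<le> \<Delta>2"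
      using L Q unfolding lipschitz_decomp_def by auto
    have "lp_dist p u v \<le> \<Delta>" if Bk: "Bk \<in> Q" "u \<in> Bk" "v \<in> Bk" for Bk u v
    proof -
      have uv: "u \<in> C" "v \<in> C" using pQ Bk unfolding partition_on_def by auto
      have "2 powr (1 - r) * lpn p (\<lambda>i. (u i - c i) - (v i - c i)) powr r
          \<le> lpn q (\<lambda>i. Mz r (\<lambda>i. u i - c i) i - Mz r (\<lambda>i. v i - c i) i)"
        by (rule Mz_lower[OF less_imp_le[OF r] _ p xc[OF uv(1)] xc[OF uv(2)]]) (use q in simp)
      also have "\<dots> \<le> \<Delta>2" using dQ Bk unfolding fdiff by blast
      finally have "2 powr (1 - r) * lp_dist p u v powr r \<le> 2 powr (1 - r) * \<Delta> powr r"
        unfolding xy_eq lp_dist_lpn[symmetric] D2 .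
      then have le: "lp_dist p u v powr r \<le> \<Delta> powr r" by simp
      show ?thesis
      proof (rule ccontr)
        assume "\<not> lp_dist p u v \<le> \<Delta>"
        then have "\<Delta> powr r < lp_dist p u v powr r" using D r by (intro powr_less_mono2) auto
        then show False using le by simp
      qed
    qed
    then show "partition_on C Q \<and> (\<forall>Bk\<in>Q. \<forall>u\<in>Bk. \<forall>v\<in>Bk. lp_dist p u v \<le> \<Delta>)" using pQ by blast
  qed
  fix x y assume xy: "x \<in> C" "y \<in> C"
  define \<theta> where "\<theta> = (real n - 1) / real n"
  have n1: "card C \<ge> 1" using C(2,3) by (simp add: Suc_le_eq card_gt_0_iff)
  have nn: "real n \<ge> 1" using n1 C(4) by linarith
  have Rb: "lpn p (\<lambda>i. z i - c i) \<le> \<theta> * \<Delta>1" if z: "z \<in> C" for z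
  proof -
    have "lpn p (\<lambda>i. z i - c i) = lp_dist p z c" unfolding lp_dist_lpn ..
    also have "\<dots> \<le> (real (card C) - 1) / real (card C) * \<Delta>1"
      unfolding c_def by (rule centroid_bound[OF pp C(2,1) z]) (use diam z in blast)
    also have "(real (card C) - 1) / real (card C) \<le> \<theta>"
    proof -
      have "1 / real n \<le> 1 / real (card C)" using n1 C(4) by (intro divide_left_mono) auto
      then have "1 - 1 / real (card C) \<le> 1 - 1 / real n" by linarith
      then show ?thesis unfolding \<theta>_def using n1 nn by (simp add: field_simps)
    qed
    then have "(real (card C) - 1) / real (card C) * \<Delta>1 \<le> \<theta> * \<Delta>1" using D1 by (intro mult_right_mono) auto
    finally show ?thesis .
  qed
  have up: "lp_dist q (f x) (f y) \<le> r * (\<theta> * \<Delta>1) powr (r - 1) * lp_dist p x y"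
  proof -
    have "lpn q (\<lambda>i. Mz r (\<lambda>i. x i - c i) i - Mz r (\<lambda>i. y i - c i) i)
       \<le> r * (\<theta> * \<Delta>1) powr (r - 1) * lpn p (\<lambda>i. (x i - c i) - (y i - c i))"
      by (rule Mz_upper[OF r _ p xc[OF xy(1)] xc[OF xy(2)] Rb[OF xy(1)] Rb[OF xy(2)]]) (use q in simp)
    then show ?thesis unfolding xy_eq fdiff[of x y, symmetric] lp_dist_lpn[of p x y, symmetric] .
  qed
  have "measure_pmf.prob (refineC q r \<beta>2 \<Delta>2 C) {P. \<not> (\<exists>Bk\<in>P. x \<in> Bk \<and> y \<in> Bk)} \<le> \<beta>2 * lp_dist q (f x) (f y) / \<Delta>2"
    using L xy unfolding lipschitz_decomp_def by auto
  also have "\<dots> \<le> \<beta>2 * (r * (\<theta> * \<Delta>1) powr (r - 1) * lp_dist p x y) / \<Delta>2"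
  proof -
    have "\<beta>2 \<ge> 0" using b2 Bn_facts(1)[OF q, of n] by linarith
    then show ?thesis using up D2p by (intro divide_right_mono mult_left_mono) auto
  qed
  finally show "measure_pmf.prob (refineC q r \<beta>2 \<Delta>2 C) (sepset x y)
            \<le> \<beta>2 * (r * ((real n - 1) / real n * \<Delta>1) powr (r - 1)) / \<Delta>2 * lp_dist p x y"
    unfolding sepset_def \<theta>_def by (simp add: algebra_simps)
qed

theorem lemma12:
  fixes p q \<beta> :: real and n :: nat and M :: "(nat \<Rightarrow> real) set"
  assumes "2 \<le> q" and "q < p"
    and "M \<subseteq> lp_space p" and "finite M" and "card M = n"
    and "\<forall>\<Delta>'>0. \<exists>D. lipschitz_decomp (lp_dist p) M \<beta> \<Delta>' D"
  shows "\<forall>\<Delta>>0. \<exists>D. lipschitz_decomp (lp_dist p) M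
           (4 * (p / (2 * q)) powr (q / p) * (beta_star_n n (lp_dist q) (lp_space q)) powr (q / p)
              * \<beta> powr (1 - q / p)) \<Delta> D"
proof (intro allI impI)
  fix \<Delta> :: real assume D: "\<Delta> > 0"
  note q2 = assms(1) and qp = assms(2) and Ml = assms(3) and Mf = assms(4) and Mn = assms(5) and hyp = assms(6)
  define B where "B = beta_star_n n (lp_dist q) (lp_space q)"
  define \<beta>n where "\<beta>n = 4 * (p / (2 * q)) powr (q / p) * B powr (q / p) * \<beta> powr (1 - q / p)"
  have q1: "q > 1" using q2 by simp
  have p1: "p > 1" using q2 qp by simp
  have p0: "p > 0" using p1 by simp
  show "\<exists>D. lipschitz_decomp (lp_dist p) M
           (4 * (p / (2 * q)) powr (q / p) * (beta_star_n n (lp_dist q) (lp_space q)) powr (q / p)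
              * \<beta> powr (1 - q / p)) \<Delta> D"
    unfolding B_def[symmetric] \<beta>n_def[symmetric]
  proof (cases "\<exists>a\<in>M. \<exists>b\<in>M. a \<noteq> b")
    case False
    then have eq: "\<And>x y. x \<in> M \<Longrightarrow> y \<in> M \<Longrightarrow> x = y" by blast
    define P0 where "P0 = (if M = {} then {} else {M})"
    have "lipschitz_decomp (lp_dist p) M \<beta>n \<Delta> (return_pmf P0)"
      unfolding lipschitz_decomp_def
    proof (rule conjI; intro ballI)
      fix P assume "P \<in> set_pmf (return_pmf P0)"
      then have P: "P = P0" by simp
      have "partition_on M P0"
        unfolding P0_def by (cases "M = {}") (auto simp: partition_on_empty partition_on_space)
      moreover have "\<forall>C\<in>P0. \<forall>x\<in>C. \<forall>y\<in>C. lp_dist p x y \<le> \<Delta>"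
      proof (intro ballI)
        fix C x y assume "C \<in> P0" "x \<in> C" "y \<in> C"
        then have "x \<in> M" "y \<in> M" unfolding P0_def by (auto split: if_splits)
        then have "x = y" by (rule eq)
        then show "lp_dist p x y \<le> \<Delta>" using D by (simp add: lp_dist_self)
      qed
      ultimately show "partition_on M P \<and> (\<forall>C\<in>P. \<forall>x\<in>C. \<forall>y\<in>C. lp_dist p x y \<le> \<Delta>)" unfolding P by blast
    next
      fix x y assume xy: "x \<in> M" "y \<in> M"
      then have "y = x" "M \<noteq> {}" using eq by auto
      then have "measure_pmf.prob (return_pmf P0) {P. \<not> (\<exists>C\<in>P. x \<in> C \<and> y \<in> C)} = 0"
        unfolding P0_def using xy by (simp add: indicator_def)
      then show "measure_pmf.prob (return_pmf P0) {P. \<not> (\<exists>C\<in>P. x \<in> C \<and> y \<in> C)} \<le> \<beta>n * lp_dist p x y / \<Delta>"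
        using \<open>y = x\<close> lp_dist_self by simp
    qed
    then show "\<exists>D. lipschitz_decomp (lp_dist p) M \<beta>n \<Delta> D" by blast
  next
    case True
    then obtain a b where ab: "a \<in> M" "b \<in> M" "a \<noteq> b" by blast
    define r where "r = p / q"
    have r: "r > 1" unfolding r_def using qp q1 by simp
    have pr: "p = r * q" unfolding r_def using q1 by simp
    define dab where "dab = lp_dist p a b"
    have dab: "dab > 0" unfolding dab_def using lp_dist_pos[OF p0] ab Ml by blast
    have b0: "\<beta> > 0"
    proof -
      obtain D' where D': "lipschitz_decomp (lp_dist p) M \<beta> (dab / 2) D'" using hyp dab by (meson half_gt_zero)
      have sub: "set_pmf D' \<subseteq> sepset a b"
      proof
        fix P assume P: "P \<in> set_pmf D'"
        have "\<forall>C\<in>P. \<forall>x\<in>C. \<forall>y\<in>C. lp_dist p x y \<le> dab / 2" using D' P unfolding lipschitz_decomp_def by blast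
        then show "P \<in> sepset a b" unfolding sepset_def dab_def using dab dab_def by force
      qed
      have "measure_pmf.prob D' (sepset a b) = 1"
        by (subst measure_pmf.prob_eq_1) (use sub in \<open>auto simp: AE_measure_pmf_iff\<close>)
      moreover have "measure_pmf.prob D' (sepset a b) \<le> \<beta> * dab / (dab / 2)"
        using D' ab unfolding lipschitz_decomp_def sepset_def dab_def by blast
      ultimately have "1 \<le> \<beta> * dab / (dab / 2)" by simp
      also have "\<beta> * dab / (dab / 2) = 2 * \<beta>" using dab by simp
      finally show ?thesis by simp
    qed
    have n2: "n \<ge> 2"
    proof -
      have "{a, b} \<subseteq> M" using ab by auto
      then have "card {a, b} \<le> card M" using Mf by (intro card_mono) auto
      then show ?thesis using ab Mn by simp
    qed
    have B1: "B \<ge> 1" unfolding B_def by (rule Bn_facts(1)[OF q1])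
    define \<theta> where "\<theta> = (real n - 1) / real n"
    have \<theta>: "0 < \<theta>" "\<theta> < 1" unfolding \<theta>_def using n2 by auto
    define c where "c = r * 2 powr (r - 1)"
    have c: "c > 0" unfolding c_def using r by simp
    define t where "t = (\<beta> / (B * c)) powr (1/r)"
    have t: "t > 0" unfolding t_def using b0 B1 c by simp
    define \<Delta>1 where "\<Delta>1 = t * \<Delta>"
    have D1p: "\<Delta>1 > 0" unfolding \<Delta>1_def using t D by simp
    define \<Delta>2 where "\<Delta>2 = 2 powr (1 - r) * \<Delta> powr r"
    have D2p: "\<Delta>2 > 0" unfolding \<Delta>2_def using D by simp
    define \<beta>2 where "\<beta>2 = B / \<theta> powr (r - 1)"
    have th1: "\<theta> powr (r - 1) < 1"
    proof -
      have "\<theta> powr (r - 1) < 1 powr (r - 1)" using \<theta> r by (intro powr_less_mono2) auto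
      then show ?thesis by simp
    qed
    have th0: "\<theta> powr (r - 1) > 0" using \<theta> by simp
    have Bb2: "B < \<beta>2" unfolding \<beta>2_def using th1 th0 B1 by (simp add: field_simps)
    obtain D1 where D1: "lipschitz_decomp (lp_dist p) M \<beta> \<Delta>1 D1" using hyp D1p by blast
    have D1part: "\<And>P. P \<in> set_pmf D1 \<Longrightarrow> partition_on M P" using D1 unfolding lipschitz_decomp_def by blast
    define DC where "DC = refineC q r \<beta>2 \<Delta>2"
    define L where "L = \<beta>2 * (r * ((real n - 1) / real n * \<Delta>1) powr (r - 1)) / \<Delta>2"
    have L0: "L \<ge> 0" unfolding L_def using Bb2 B1 D2p r by simp
    have clusterfacts: "C \<subseteq> lp_space p \<and> finite C \<and> C \<noteq> {} \<and> card C \<le> n \<and> (\<forall>x\<in>C. \<forall>y\<in>C. lp_dist p x y \<le> \<Delta>1)"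
      if P: "P \<in> set_pmf D1" and C: "C \<in> P" for P C
    proof -
      have pP: "partition_on M P" by (rule D1part[OF P])
      have CM: "C \<subseteq> M" using pP C unfolding partition_on_def by auto
      have "C \<noteq> {}" using pP C unfolding partition_on_def by auto
      moreover have "finite C" using CM Mf by (rule finite_subset)
      moreover have "card C \<le> n" using CM Mf Mn card_mono by blast
      moreover have "\<forall>x\<in>C. \<forall>y\<in>C. lp_dist p x y \<le> \<Delta>1" using D1 P C unfolding lipschitz_decomp_def by blast
      ultimately show ?thesis using CM Ml by blast
    qed
    have RC1: "\<forall>Q\<in>set_pmf (DC C). partition_on C Q \<and> (\<forall>Bk\<in>Q. \<forall>u\<in>Bk. \<forall>v\<in>Bk. lp_dist p u v \<le> \<Delta>)"
      if P: "P \<in> set_pmf D1" and C: "C \<in> P" for P C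
      unfolding DC_def using clusterfacts[OF P C]
      by (intro refine_cluster(1)[OF r q1 pr _ _ _ _ _ D1p D Bb2[unfolded B_def] \<Delta>2_def]) auto
    have RC2: "measure_pmf.prob (DC C) (sepset x y) \<le> L * lp_dist p x y"
      if P: "P \<in> set_pmf D1" and C: "C \<in> P" and xy: "x \<in> C" "y \<in> C" for P C x y
      unfolding DC_def L_def using clusterfacts[OF P C]
      by (intro refine_cluster(2)[OF r q1 pr _ _ _ _ _ D1p D Bb2[unfolded B_def] \<Delta>2_def xy]) auto
    define DD where "DD = bind_pmf D1 (\<lambda>P. map_pmf (\<lambda>g. \<Union>C\<in>P. g C) (Pi_pmf P {} DC))"
    have Lval: "L = B * c * t powr (r - 1) / \<Delta>"
    proof -
      have "((real n - 1) / real n * \<Delta>1) powr (r - 1) = \<theta> powr (r - 1) * (t powr (r - 1) * \<Delta> powr (r - 1))"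
        unfolding \<theta>_def[symmetric] \<Delta>1_def using \<theta> t D by (simp add: powr_mult)
      then have "L = (\<beta>2 * \<theta> powr (r - 1)) * r * t powr (r - 1) * (\<Delta> powr (r - 1) / \<Delta>2)"
        unfolding L_def by (simp add: algebra_simps)
      also have "\<beta>2 * \<theta> powr (r - 1) = B" unfolding \<beta>2_def using th0 by simp
      also have "\<Delta> powr (r - 1) / \<Delta>2 = 2 powr (r - 1) / \<Delta>"
      proof -
        have "\<Delta> powr (r - 1) = \<Delta> powr r / \<Delta>" using D by (simp add: powr_diff)
        moreover have "2 powr (1 - r) = 1 / 2 powr (r - 1)" by (simp add: powr_diff powr_minus_divide[symmetric])
        ultimately show ?thesis unfolding \<Delta>2_def using D by (simp add: field_simps)
      qed
      finally show ?thesis unfolding c_def by (simp add: algebra_simps)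
    qed
    have tot: "\<beta> / \<Delta>1 + L = \<beta>n / \<Delta>"
    proof -
      have e1: "q / p = 1 / r" "p / (2 * q) = r / 2" unfolding r_def using q1 p1 by auto
      have "\<beta>n = 4 * (r / 2) powr (1/r) * B powr (1/r) * \<beta> powr (1 - 1/r)" unfolding \<beta>n_def e1 ..
      then show ?thesis unfolding Lval \<Delta>1_def t_def c_def
        using final_algebra[OF b0 _ r D, of B] B1 by simp
    qed
    have "lipschitz_decomp (lp_dist p) M \<beta>n \<Delta> DD"
      unfolding lipschitz_decomp_def
    proof (rule conjI; intro ballI)
      fix PP assume PP: "PP \<in> set_pmf DD"
      show "partition_on M PP \<and> (\<forall>C\<in>PP. \<forall>x\<in>C. \<forall>y\<in>C. lp_dist p x y \<le> \<Delta>)"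
      proof (rule compose_support[OF Mf D1part _ PP[unfolded DD_def]])
        fix P C Q assume "P \<in> set_pmf D1" "C \<in> P" "Q \<in> set_pmf (DC C)"
        then show "partition_on C Q \<and> (\<forall>B\<in>Q. \<forall>x\<in>B. \<forall>y\<in>B. lp_dist p x y \<le> \<Delta>)"
          using RC1 by blast
      qed
    next
      fix x y assume xy: "x \<in> M" "y \<in> M"
      have "measure_pmf.prob DD (sepset x y) \<le> measure_pmf.prob D1 (sepset x y) + L * lp_dist p x y"
        unfolding DD_def
      proof (rule compose_prob[OF Mf D1part])
        show "\<And>P C Q. P \<in> set_pmf D1 \<Longrightarrow> C \<in> P \<Longrightarrow> Q \<in> set_pmf (DC C) \<Longrightarrow> partition_on C Q"
          using RC1 by blast
        show "\<And>P C. P \<in> set_pmf D1 \<Longrightarrow> C \<in> P \<Longrightarrow> x \<in> C \<Longrightarrow> y \<in> C \<Longrightarrow> measure_pmf.prob (DC C) (sepset x y) \<le> L * lp_dist p x y"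
          using RC2 by blast
        show "0 \<le> L * lp_dist p x y" using L0 lp_dist_nonneg by simp
      qed
      also have "measure_pmf.prob D1 (sepset x y) \<le> \<beta> * lp_dist p x y / \<Delta>1"
        using D1 xy unfolding lipschitz_decomp_def sepset_def by blast
      also have "\<beta> * lp_dist p x y / \<Delta>1 + L * lp_dist p x y = (\<beta> / \<Delta>1 + L) * lp_dist p x y"
        by (simp add: algebra_simps)
      also have "\<dots> = \<beta>n * lp_dist p x y / \<Delta>" unfolding tot by simp
      finally show "measure_pmf.prob DD {P. \<not> (\<exists>C\<in>P. x \<in> C \<and> y \<in> C)} \<le> \<beta>n * lp_dist p x y / \<Delta>"
        unfolding sepset_def by simp
    qed
    then show "\<exists>D. lipschitz_decomp (lp_dist p) M \<beta>n \<Delta> D" by blast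
  qed
qed

end
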